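(* Let $d\ge1$, $p\geq1$, $\alpha>0$, and let $\mu\in\mathcal P(\mathbb R^d)$ satisfy $\int_{\mathbb R^d}|x|^p\big(\log(1+|x|)\big)^\alpha\,\mu(dx)<\infty$; let $X\sim\mu$. Fix $\varepsilon>0$ and set $\gamma_\varepsilon=\frac{p}{2(p+\varepsilon)(p+d)}$, $C=\max\{2^{p-1}C_{p,d}^p,2^{3p-2}\}$ with $C_{p,d}=2^{3/2}\big(\Gamma(\frac{p+d}{2})/\Gamma(\frac{d}{2})\big)^{1/p}$. Then, as $N\to\infty$, \[ \mathbb E\big[{\mathcal W}_p^p(\mu_N,\mu)\big] \ \leq \ C\,\frac{1 + \mathbb E\big[|X|^p\big(\log(1+|X|)\big)^\alpha\big]}{(\log(1+N^{\gamma_\varepsilon}))^\alpha} + o\bigg(\frac{1}{(\log(1+N^{\gamma_\varepsilon}))^\alpha}\bigg). \]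
   Context: $\mathcal P(\mathbb R^d)$ is the set of Borel probability measures on $\mathbb R^d$. ${\mathcal W}_p$ is the $p$-Wasserstein distance ${\mathcal W}_p(\mu,\nu)=\inf_{\pi\in\Pi(\mu,\nu)}\big(\int|x-y|^p\,\pi(dx,dy)\big)^{1/p}$. $(X_k)_{k\ge1}$ is an i.i.d. sequence of $\mu$-distributed random variables and $\mu_N=\frac1N\sum_{k=1}^N\delta_{X_k}$. $\Gamma$ is the gamma function. *)

theory Defs
  imports "HOL-Probability.Probability"
begin

definition couplings :: "'a::euclidean_space measure \<Rightarrow> 'a measure \<Rightarrow> ('a \<times> 'a) measure set" where
  "couplings \<mu> \<nu> = {\<pi>. sets \<pi> = sets (borel \<Otimes>\<^sub>M borel) \<and> prob_space \<pi> \<and>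
      distr \<pi> borel fst = \<mu> \<and> distr \<pi> borel snd = \<nu>}"

definition wasserstein_pow :: "real \<Rightarrow> 'a::euclidean_space measure \<Rightarrow> 'a measure \<Rightarrow> ennreal" where
  "wasserstein_pow p \<mu> \<nu> =
     (INF \<pi>\<in>couplings \<mu> \<nu>. \<integral>\<^sup>+ z. ennreal (norm (fst z - snd z) powr p) \<partial>\<pi>)"

definition empirical_measure :: "(nat \<Rightarrow> 'a::euclidean_space) \<Rightarrow> nat \<Rightarrow> 'a measure" where
  "empirical_measure x N = distr (uniform_measure (count_space UNIV) {1..N}) borel x"

end

theory Submission
  imports Defs "HOL-Real_Asymp.Real_Asymp"
begin

lemma powr_sum_le:
  fixes a b p :: real
  assumes "a \<ge> 0" "b \<ge> 0" "p \<ge> 1"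
  shows "(a + b) powr p \<le> 2 powr (p - 1) * (a powr p + b powr p)"
proof (cases "a = 0 \<or> b = 0")
  case True
  have "1 \<le> 2 powr (p - 1)" using assms by (simp add: ge_one_powr_ge_zero)
  then show ?thesis using True assms
    by (auto simp: mult_le_cancel_right1 intro: mult_right_mono[of 1, simplified])
next
  case False
  hence pos: "a > 0" "b > 0" using assms by auto
  have "((1/2) * a + (1 - 1/2) * b) powr p \<le> (1/2) * a powr p + (1 - 1/2) * b powr p"
    using convex_onD[OF powr_convex[OF assms(3)], of "1/2" a b] pos by auto
  hence h: "((a + b)/2) powr p \<le> (a powr p + b powr p)/2" by (simp add: field_simps)
  have e: "(2::real) * ((a+b)/2) = a+b" by simp
  have "(2 * ((a+b)/2)) powr p = 2 powr p * ((a+b)/2) powr p"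
    by (rule powr_mult)
  hence "(a + b) powr p = 2 powr p * ((a+b)/2) powr p" by (simp only: e)
  also have "\<dots> \<le> 2 powr p * ((a powr p + b powr p)/2)"
    using h by (intro mult_left_mono) auto
  also have "\<dots> = 2 powr (p - 1) * (a powr p + b powr p)"
    by (simp add: powr_diff field_simps)
  finally show ?thesis .
qed

lemma nn_integral_prod_split:
  assumes "sigma_finite_measure Q"
    and f: "f \<in> borel_measurable P" and g: "g \<in> borel_measurable Q"
  shows "(\<integral>\<^sup>+ z. f (fst z) * g (snd z) \<partial>(P \<Otimes>\<^sub>M Q)) = (\<integral>\<^sup>+ x. f x \<partial>P) * (\<integral>\<^sup>+ y. g y \<partial>Q)"
proof -
  interpret Q: sigma_finite_measure Q by fact
  have "(\<integral>\<^sup>+ z. f (fst z) * g (snd z) \<partial>(P \<Otimes>\<^sub>M Q)) = (\<integral>\<^sup>+ x. \<integral>\<^sup>+ y. f x * g y \<partial>Q \<partial>P)"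
    by (subst Q.nn_integral_fst[symmetric]) (use f g in auto)
  also have "\<dots> = (\<integral>\<^sup>+ x. f x * (\<integral>\<^sup>+ y. g y \<partial>Q) \<partial>P)"
    by (intro nn_integral_cong nn_integral_cmult g)
  also have "\<dots> = (\<integral>\<^sup>+ x. f x \<partial>P) * (\<integral>\<^sup>+ y. g y \<partial>Q)"
    by (intro nn_integral_multc f)
  finally show ?thesis .
qed

lemma emp_sets[simp]: "sets (empirical_measure x N) = sets borel"
  by (simp add: empirical_measure_def)

lemma emp_space[simp]: "space (empirical_measure x N) = UNIV"
  by (simp add: empirical_measure_def)

lemma emp_prob: assumes "N \<ge> 1" shows "prob_space (empirical_measure x N)"
  unfolding empirical_measure_def
  by (rule prob_space.prob_space_distr, rule prob_space_uniform_measure)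
     (use assms in \<open>auto\<close>)

lemma emp_nn_integral:
  assumes "N \<ge> 1" and f: "f \<in> borel_measurable borel"
  shows "(\<integral>\<^sup>+ y. f y \<partial>empirical_measure x N) = (\<Sum>k\<in>{1..N}. f (x k)) / of_nat N"
proof -
  have "(\<integral>\<^sup>+ y. f y \<partial>empirical_measure x N)
      = (\<integral>\<^sup>+ k. f (x k) \<partial>uniform_measure (count_space UNIV) {1..N})"
    unfolding empirical_measure_def by (subst nn_integral_distr) (use f in auto)
  also have "\<dots> = (\<integral>\<^sup>+ k. f (x k) * indicator {1..N} k \<partial>count_space UNIV) / emeasure (count_space UNIV) {1..N}"
    by (subst nn_integral_uniform_measure) auto
  also have "\<dots> = (\<Sum>k\<in>{1..N}. f (x k)) / of_nat N"
    by (subst nn_integral_indicator_finite) auto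
  finally show ?thesis .
qed

lemma emp_measure:
  assumes "N \<ge> 1" and S: "S \<in> sets borel"
  shows "measure (empirical_measure x N) S = (\<Sum>k\<in>{1..N}. indicator S (x k)) / real N"
proof -
  interpret prob_space "empirical_measure x N" using emp_prob[OF assms(1)] .
  have "emeasure (empirical_measure x N) S = (\<integral>\<^sup>+ y. indicator S y \<partial>empirical_measure x N)"
    using S by simp
  also have "\<dots> = (\<Sum>k\<in>{1..N}. indicator S (x k)) / of_nat N"
    by (subst emp_nn_integral) (use assms in auto)
  also have "\<dots> = ennreal (\<Sum>k\<in>{1..N}. indicator S (x k)) / ennreal (real N)"
  proof -
    have s1: "(\<Sum>k\<in>{1..N}. indicator S (x k) :: ennreal) = ennreal (\<Sum>k\<in>{1..N}. indicator S (x k))"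
      by (simp add: sum_ennreal[symmetric] ennreal_indicator)
    have s2: "(of_nat N :: ennreal) = ennreal (real N)" by (simp add: ennreal_of_nat_eq_real_of_nat)
    show ?thesis by (simp only: s1 s2)
  qed
  also have "\<dots> = ennreal ((\<Sum>k\<in>{1..N}. indicator S (x k)) / real N)"
    using assms by (intro divide_ennreal) (auto intro!: sum_nonneg)
  finally show ?thesis
    by (simp add: measure_def) (metis ennreal_0 enn2real_ennreal divide_nonneg_nonneg of_nat_0_le_iff sum_nonneg indicator_pos_le)
qed

lemma measure_split_cells:
  assumes "finite_measure M" "sets M = sets borel" "finite I"
    and A: "\<And>i. A i \<in> sets borel" and disj: "disjoint_family_on A I" and S: "S \<in> sets borel"
  shows "measure M S = (\<Sum>i\<in>I. measure M (A i \<inter> S)) + measure M ((- (\<Union>i\<in>I. A i)) \<inter> S)"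
proof -
  interpret finite_measure M by fact
  have U: "(\<Union>i\<in>I. A i \<inter> S) \<in> sets M" using A S assms(2,3) by auto
  have e: "(- (\<Union>i\<in>I. A i)) \<inter> S = S - (\<Union>i\<in>I. A i \<inter> S)" by auto
  have "measure M ((- (\<Union>i\<in>I. A i)) \<inter> S) = measure M S - measure M (\<Union>i\<in>I. A i \<inter> S)"
    unfolding e by (rule finite_measure_Diff) (use U S assms(2) in auto)
  moreover have "measure M (\<Union>i\<in>I. A i \<inter> S) = (\<Sum>i\<in>I. measure M (A i \<inter> S))"
  proof (rule finite_measure_finite_Union)
    show "finite I" by fact
    show "(\<lambda>i. A i \<inter> S) ` I \<subseteq> sets M" using A S assms(2) by auto
    show "disjoint_family_on (\<lambda>i. A i \<inter> S) I" using disj unfolding disjoint_family_on_def by blast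
  qed
  ultimately show ?thesis by simp
qed

lemma nn_int_ind_sum:
  assumes "finite_measure M" and B: "\<And>i. i \<in> I \<Longrightarrow> B i \<in> sets M" and c: "\<And>i. i \<in> I \<Longrightarrow> c i \<ge> 0"
  shows "(\<integral>\<^sup>+ x. ennreal (\<Sum>i\<in>I. c i * indicator (B i) x) \<partial>M) = ennreal (\<Sum>i\<in>I. c i * measure M (B i))"
proof -
  interpret finite_measure M by fact
  have "(\<integral>\<^sup>+ x. ennreal (\<Sum>i\<in>I. c i * indicator (B i) x) \<partial>M) = (\<integral>\<^sup>+ x. (\<Sum>i\<in>I. ennreal (c i * indicator (B i) x)) \<partial>M)"
    by (intro nn_integral_cong sum_ennreal[symmetric]) (use c in auto)
  also have "\<dots> = (\<Sum>i\<in>I. \<integral>\<^sup>+ x. ennreal (c i) * indicator (B i) x \<partial>M)"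
    by (subst nn_integral_sum) (use B in \<open>auto simp: ennreal_mult ennreal_indicator c\<close>)
  also have "\<dots> = (\<Sum>i\<in>I. ennreal (c i * measure M (B i)))"
    by (intro sum.cong refl) (use B c in \<open>auto simp: nn_integral_cmult_indicator emeasure_eq_measure ennreal_mult\<close>)
  also have "\<dots> = ennreal (\<Sum>i\<in>I. c i * measure M (B i))"
    by (intro sum_ennreal) (use c in auto)
  finally show ?thesis .
qed

lemma marg_id:
  fixes a b p m :: "'i \<Rightarrow> real"
  assumes fin: "finite I" and a: "\<And>i. a i \<ge> 0" and b: "\<And>i. b i \<ge> 0"
    and p0: "\<And>i. 0 \<le> p i" and pa: "\<And>i. p i \<le> a i" and po0: "0 \<le> po" and poa: "po \<le> ao"
    and tot: "(\<Sum>i\<in>I. a i) + ao = 1" and m: "\<And>i. m i = min (a i) (b i)"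
  shows "(\<Sum>i\<in>I. m i / (a i * b i) * p i * b i) + 1 / (1 - (\<Sum>i\<in>I. m i)) * ((\<Sum>i\<in>I. (1 - m i / a i) * p i) + po) * (1 - (\<Sum>i\<in>I. m i))
     = (\<Sum>i\<in>I. p i) + po"
proof (cases "1 - (\<Sum>i\<in>I. m i) = 0")
  case False
  have pi: "m i / (a i * b i) * p i * b i + (1 - m i / a i) * p i = p i" for i
  proof -
    consider "a i = 0" | "b i = 0" | "a i > 0" "b i > 0" using a[of i] b[of i] by fastforce
    then show ?thesis
    proof cases
      case 1 then show ?thesis using p0[of i] pa[of i] by simp
    next
      case 2 then show ?thesis using m[of i] a[of i] by simp
    next
      case 3 then show ?thesis by (simp add: field_simps)
    qed
  qed
  have "1 / (1 - (\<Sum>i\<in>I. m i)) * ((\<Sum>i\<in>I. (1 - m i / a i) * p i) + po) * (1 - (\<Sum>i\<in>I. m i))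
      = (\<Sum>i\<in>I. (1 - m i / a i) * p i) + po" using False by simp
  then show ?thesis using pi by (simp add: sum.distrib[symmetric])
next
  case True
  have mle: "m i \<le> a i" for i using m[of i] by simp
  have "(\<Sum>i\<in>I. a i - m i) + ao = 0" using True tot by (simp add: sum_subtractf)
  moreover have "(\<Sum>i\<in>I. a i - m i) \<ge> 0" by (intro sum_nonneg) (simp add: mle)
  moreover have "ao \<ge> 0" using po0 poa by simp
  ultimately have s0: "(\<Sum>i\<in>I. a i - m i) = 0" and ao0: "ao = 0" by linarith+
  have ami: "i \<in> I \<Longrightarrow> m i = a i" for i
    using sum_nonneg_eq_0_iff[OF fin, of "\<lambda>i. a i - m i"] s0 mle by auto
  have pi: "i \<in> I \<Longrightarrow> m i / (a i * b i) * p i * b i = p i" for i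
  proof -
    assume "i \<in> I"
    show ?thesis
    proof (cases "a i = 0")
      case True then show ?thesis using p0[of i] pa[of i] by simp
    next
      case False
      hence "a i > 0" using a[of i] by simp
      moreover have "a i \<le> b i" using m[of i] ami[OF \<open>i\<in>I\<close>] by (simp add: min_def split: if_splits)
      ultimately show ?thesis using ami[OF \<open>i\<in>I\<close>] by (simp add: field_simps)
    qed
  qed
  show ?thesis using True ao0 po0 poa pi by simp
qed

locale cplg =
  fixes P Q :: "'a::euclidean_space measure" and I :: "'i set" and A :: "'i \<Rightarrow> 'a set"
  assumes probP: "prob_space P" and setsP: "sets P = sets borel"
    and probQ: "prob_space Q" and setsQ: "sets Q = sets borel"
    and finI: "finite I" and Ab[measurable]: "\<And>i. A i \<in> sets borel"
    and disj: "disjoint_family_on A I"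
begin

definition "Oc = - (\<Union>i\<in>I. A i)"
definition "a i = measure P (A i)"
definition "b i = measure Q (A i)"
definition "mn i = min (a i) (b i)"
definition "D = 1 - (\<Sum>i\<in>I. mn i)"
definition "c1 i = 1 - mn i / a i"
definition "c2 i = 1 - mn i / b i"
definition "r1 x = (\<Sum>i\<in>I. c1 i * indicator (A i) x) + indicator Oc x"
definition "r2 y = (\<Sum>i\<in>I. c2 i * indicator (A i) y) + indicator Oc y"
definition "w i = mn i / (a i * b i)"
definition "H x y = (\<Sum>i\<in>I. w i * (indicator (A i) x * indicator (A i) y)) + (r1 x * r2 y) / D"
definition "cp = density (P \<Otimes>\<^sub>M Q) (\<lambda>z. ennreal (H (fst z) (snd z)))"

lemma Oc_b[measurable]: "Oc \<in> sets borel"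
proof -
  have "(\<Union>i\<in>I. A i) \<in> sets borel" using finI by (auto intro: sets.finite_UN)
  then have "UNIV - (\<Union>i\<in>I. A i) \<in> sets borel" by (intro sets.Diff) auto
  then show ?thesis by (simp add: Oc_def Compl_eq_Diff_UNIV)
qed

lemma fmP: "finite_measure P" using probP by (simp add: prob_space_def)
lemma fmQ: "finite_measure Q" using probQ by (simp add: prob_space_def)

lemma a_nn: "a i \<ge> 0" by (simp add: a_def)
lemma b_nn: "b i \<ge> 0" by (simp add: b_def)
lemma mn_nn: "mn i \<ge> 0" by (simp add: mn_def a_nn b_nn)
lemma mn_le_a: "mn i \<le> a i" by (simp add: mn_def)
lemma mn_le_b: "mn i \<le> b i" by (simp add: mn_def)
lemma c1_nn: "c1 i \<ge> 0"
  using mn_le_a[of i] a_nn[of i] mn_nn[of i] by (cases "a i = 0") (auto simp: c1_def field_simps)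
lemma c2_nn: "c2 i \<ge> 0"
  using mn_le_b[of i] b_nn[of i] mn_nn[of i] by (cases "b i = 0") (auto simp: c2_def field_simps)
lemma w_nn: "w i \<ge> 0" by (simp add: w_def mn_nn a_nn b_nn)
lemma c1a: "c1 i * a i = a i - mn i"
  using mn_le_a[of i] a_nn[of i] mn_nn[of i] by (cases "a i = 0") (auto simp: c1_def field_simps)
lemma c2b: "c2 i * b i = b i - mn i"
  using mn_le_b[of i] b_nn[of i] mn_nn[of i] by (cases "b i = 0") (auto simp: c2_def field_simps)

lemma r1_nn: "r1 x \<ge> 0" unfolding r1_def by (intro add_nonneg_nonneg sum_nonneg) (auto simp: c1_nn)
lemma r2_nn: "r2 x \<ge> 0" unfolding r2_def by (intro add_nonneg_nonneg sum_nonneg) (auto simp: c2_nn)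

lemma splitP: "S \<in> sets borel \<Longrightarrow> measure P S = (\<Sum>i\<in>I. measure P (A i \<inter> S)) + measure P (Oc \<inter> S)"
  unfolding Oc_def by (rule measure_split_cells[OF fmP setsP finI Ab disj])
lemma splitQ: "S \<in> sets borel \<Longrightarrow> measure Q S = (\<Sum>i\<in>I. measure Q (A i \<inter> S)) + measure Q (Oc \<inter> S)"
  unfolding Oc_def by (rule measure_split_cells[OF fmQ setsQ finI Ab disj])

lemma sumaP: "(\<Sum>i\<in>I. a i) + measure P Oc = 1"
  using splitP[of UNIV] prob_space.prob_space[OF probP] setsP
  by (simp add: a_def sets_eq_imp_space_eq[OF setsP])
lemma sumbQ: "(\<Sum>i\<in>I. b i) + measure Q Oc = 1"
  using splitQ[of UNIV] prob_space.prob_space[OF probQ] setsQ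
  by (simp add: b_def sets_eq_imp_space_eq[OF setsQ])

lemma D_eq1: "D = (\<Sum>i\<in>I. a i - mn i) + measure P Oc"
  using sumaP by (simp add: D_def sum_subtractf)
lemma D_eq2: "D = (\<Sum>i\<in>I. b i - mn i) + measure Q Oc"
  using sumbQ by (simp add: D_def sum_subtractf)
lemma D_nn: "D \<ge> 0"
  unfolding D_eq1 by (intro add_nonneg_nonneg sum_nonneg) (auto simp: mn_le_a)

lemma H_nn: "H x y \<ge> 0"
  unfolding H_def by (intro add_nonneg_nonneg sum_nonneg divide_nonneg_nonneg mult_nonneg_nonneg)
    (auto simp: w_nn r1_nn r2_nn D_nn)

lemma r1_meas[measurable]: "r1 \<in> borel_measurable borel" unfolding r1_def by measurable
lemma r2_meas[measurable]: "r2 \<in> borel_measurable borel" unfolding r2_def by measurable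
lemma H_meas[measurable]: "(\<lambda>z. H (fst z) (snd z)) \<in> borel_measurable (borel \<Otimes>\<^sub>M borel)"
  unfolding H_def by measurable

definition "R1 S = (\<Sum>i\<in>I. c1 i * measure P (A i \<inter> S)) + measure P (Oc \<inter> S)"
definition "R2 T = (\<Sum>i\<in>I. c2 i * measure Q (A i \<inter> T)) + measure Q (Oc \<inter> T)"

lemma R1_nn: "R1 S \<ge> 0" unfolding R1_def by (intro add_nonneg_nonneg sum_nonneg mult_nonneg_nonneg) (auto simp: c1_nn)
lemma R2_nn: "R2 S \<ge> 0" unfolding R2_def by (intro add_nonneg_nonneg sum_nonneg mult_nonneg_nonneg) (auto simp: c2_nn)

lemma int_r1:
  assumes S[measurable]: "S \<in> sets borel"
  shows "(\<integral>\<^sup>+ x. ennreal (r1 x * indicator S x) \<partial>P) = ennreal (R1 S)"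
proof -
  have "(\<integral>\<^sup>+ x. ennreal (r1 x * indicator S x) \<partial>P)
     = (\<integral>\<^sup>+ x. ennreal (\<Sum>i\<in>I. c1 i * indicator (A i \<inter> S) x) + ennreal (indicator (Oc \<inter> S) x) \<partial>P)"
  proof (intro nn_integral_cong)
    fix x
    have "r1 x * indicator S x = (\<Sum>i\<in>I. c1 i * indicator (A i \<inter> S) x) + indicator (Oc \<inter> S) x"
      by (simp add: r1_def indicator_inter_arith sum_distrib_right sum_distrib_left algebra_simps)
    then show "ennreal (r1 x * indicator S x) = ennreal (\<Sum>i\<in>I. c1 i * indicator (A i \<inter> S) x) + ennreal (indicator (Oc \<inter> S) x)"
      by (simp only:) (intro ennreal_plus sum_nonneg mult_nonneg_nonneg, auto simp: c1_nn)
  qed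
  also have "\<dots> = (\<integral>\<^sup>+ x. ennreal (\<Sum>i\<in>I. c1 i * indicator (A i \<inter> S) x) \<partial>P) + (\<integral>\<^sup>+ x. indicator (Oc \<inter> S) x \<partial>P)"
    by (subst nn_integral_add) (auto simp: measurable_cong_sets[OF setsP refl] ennreal_indicator)
  also have "\<dots> = ennreal (\<Sum>i\<in>I. c1 i * measure P (A i \<inter> S)) + ennreal (measure P (Oc \<inter> S))"
    by (subst nn_int_ind_sum[OF fmP]) (auto simp: setsP c1_nn fmP finite_measure.emeasure_eq_measure)
  also have "\<dots> = ennreal (R1 S)"
    unfolding R1_def by (intro ennreal_plus[symmetric] sum_nonneg mult_nonneg_nonneg) (auto simp: c1_nn)
  finally show ?thesis .
qed

lemma int_r2:
  assumes S[measurable]: "S \<in> sets borel"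
  shows "(\<integral>\<^sup>+ x. ennreal (r2 x * indicator S x) \<partial>Q) = ennreal (R2 S)"
proof -
  have "(\<integral>\<^sup>+ x. ennreal (r2 x * indicator S x) \<partial>Q)
     = (\<integral>\<^sup>+ x. ennreal (\<Sum>i\<in>I. c2 i * indicator (A i \<inter> S) x) + ennreal (indicator (Oc \<inter> S) x) \<partial>Q)"
  proof (intro nn_integral_cong)
    fix x
    have "r2 x * indicator S x = (\<Sum>i\<in>I. c2 i * indicator (A i \<inter> S) x) + indicator (Oc \<inter> S) x"
      by (simp add: r2_def indicator_inter_arith sum_distrib_right sum_distrib_left algebra_simps)
    then show "ennreal (r2 x * indicator S x) = ennreal (\<Sum>i\<in>I. c2 i * indicator (A i \<inter> S) x) + ennreal (indicator (Oc \<inter> S) x)"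
      by (simp only:) (intro ennreal_plus sum_nonneg mult_nonneg_nonneg, auto simp: c2_nn)
  qed
  also have "\<dots> = (\<integral>\<^sup>+ x. ennreal (\<Sum>i\<in>I. c2 i * indicator (A i \<inter> S) x) \<partial>Q) + (\<integral>\<^sup>+ x. indicator (Oc \<inter> S) x \<partial>Q)"
    by (subst nn_integral_add) (auto simp: measurable_cong_sets[OF setsQ refl] ennreal_indicator)
  also have "\<dots> = ennreal (\<Sum>i\<in>I. c2 i * measure Q (A i \<inter> S)) + ennreal (measure Q (Oc \<inter> S))"
    by (subst nn_int_ind_sum[OF fmQ]) (auto simp: setsQ c2_nn fmQ finite_measure.emeasure_eq_measure)
  also have "\<dots> = ennreal (R2 S)"
    unfolding R2_def by (intro ennreal_plus[symmetric] sum_nonneg mult_nonneg_nonneg) (auto simp: c2_nn)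
  finally show ?thesis .
qed

lemma measP[simp]: "measurable P M = measurable borel M" by (rule measurable_cong_sets[OF setsP refl])
lemma measQ[simp]: "measurable Q M = measurable borel M" by (rule measurable_cong_sets[OF setsQ refl])
lemma sets_PQ: "sets (P \<Otimes>\<^sub>M Q) = sets (borel \<Otimes>\<^sub>M borel)" by (rule sets_pair_measure_cong[OF setsP setsQ])
lemma measPQ[simp]: "measurable (P \<Otimes>\<^sub>M Q) M = measurable (borel \<Otimes>\<^sub>M borel) M"
  by (rule measurable_cong_sets[OF sets_PQ refl])
lemma sets_cp: "sets cp = sets (borel \<Otimes>\<^sub>M borel)" by (simp add: cp_def sets_PQ)
lemma space_cp[simp]: "space cp = UNIV" by (simp add: cp_def space_pair_measure sets_eq_imp_space_eq[OF setsP] sets_eq_imp_space_eq[OF setsQ])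
lemma sfQ: "sigma_finite_measure Q" using probQ by (simp add: prob_space_imp_sigma_finite)

lemma cp_rect:
  assumes S[measurable]: "S \<in> sets borel" and T[measurable]: "T \<in> sets borel"
  shows "emeasure cp (S \<times> T) = ennreal ((\<Sum>i\<in>I. w i * measure P (A i \<inter> S) * measure Q (A i \<inter> T)) + (1/D) * R1 S * R2 T)"
proof -
  have pw: "ennreal (H x y) * indicator (S \<times> T) (x,y) =
     (\<Sum>i\<in>I. ennreal (w i * indicator (A i \<inter> S) x) * ennreal (indicator (A i \<inter> T) y))
     + ennreal (1/D) * (ennreal (r1 x * indicator S x) * ennreal (r2 y * indicator T y))" for x y
  proof -
    have e: "H x y * (indicator S x * indicator T y) = (\<Sum>i\<in>I. w i * indicator (A i \<inter> S) x * indicator (A i \<inter> T) y)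
       + (1/D) * ((r1 x * indicator S x) * (r2 y * indicator T y))"
      by (simp add: H_def indicator_inter_arith sum_distrib_right sum_distrib_left algebra_simps)
    have "ennreal (H x y) * indicator (S \<times> T) (x,y) = ennreal (H x y * (indicator S x * indicator T y))"
      by (auto simp: indicator_def)
    also have "\<dots> = ennreal (\<Sum>i\<in>I. w i * indicator (A i \<inter> S) x * indicator (A i \<inter> T) y)
       + ennreal ((1/D) * ((r1 x * indicator S x) * (r2 y * indicator T y)))"
      unfolding e by (intro ennreal_plus sum_nonneg mult_nonneg_nonneg) (auto simp: w_nn D_nn r1_nn r2_nn)
    also have "\<dots> = (\<Sum>i\<in>I. ennreal (w i * indicator (A i \<inter> S) x) * ennreal (indicator (A i \<inter> T) y))
     + ennreal (1/D) * (ennreal (r1 x * indicator S x) * ennreal (r2 y * indicator T y))"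
      by (subst sum_ennreal[symmetric]) (auto simp: ennreal_mult'[symmetric] w_nn D_nn r1_nn r2_nn intro!: mult_nonneg_nonneg)
    finally show ?thesis .
  qed
  have "emeasure cp (S \<times> T) = (\<integral>\<^sup>+ z. ennreal (H (fst z) (snd z)) * indicator (S \<times> T) z \<partial>(P \<Otimes>\<^sub>M Q))"
    unfolding cp_def by (rule emeasure_density) (auto simp: sets_PQ)
  also have "\<dots> = (\<integral>\<^sup>+ z. (\<Sum>i\<in>I. ennreal (w i * indicator (A i \<inter> S) (fst z)) * ennreal (indicator (A i \<inter> T) (snd z)))
     + ennreal (1/D) * (ennreal (r1 (fst z) * indicator S (fst z)) * ennreal (r2 (snd z) * indicator T (snd z))) \<partial>(P \<Otimes>\<^sub>M Q))"
    by (intro nn_integral_cong) (metis pw prod.collapse)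
  also have "\<dots> = (\<Sum>i\<in>I. (\<integral>\<^sup>+ z. ennreal (w i * indicator (A i \<inter> S) (fst z)) * ennreal (indicator (A i \<inter> T) (snd z)) \<partial>(P \<Otimes>\<^sub>M Q)))
     + ennreal (1/D) * (\<integral>\<^sup>+ z. ennreal (r1 (fst z) * indicator S (fst z)) * ennreal (r2 (snd z) * indicator T (snd z)) \<partial>(P \<Otimes>\<^sub>M Q))"
    by (subst nn_integral_add, simp, simp, subst nn_integral_sum, simp, subst nn_integral_cmult, simp_all)
  also have "\<dots> = (\<Sum>i\<in>I. ennreal (w i * measure P (A i \<inter> S)) * ennreal (measure Q (A i \<inter> T)))
     + ennreal (1/D) * (ennreal (R1 S) * ennreal (R2 T))"
  proof -
    have "(\<integral>\<^sup>+ z. ennreal (w i * indicator (A i \<inter> S) (fst z)) * ennreal (indicator (A i \<inter> T) (snd z)) \<partial>(P \<Otimes>\<^sub>M Q))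
        = ennreal (w i * measure P (A i \<inter> S)) * ennreal (measure Q (A i \<inter> T))" for i
      by (subst nn_integral_prod_split[OF sfQ]) 
         (auto simp: ennreal_mult' ennreal_indicator w_nn nn_integral_cmult_indicator setsP setsQ
            finite_measure.emeasure_eq_measure[OF fmP] finite_measure.emeasure_eq_measure[OF fmQ])
    moreover have "(\<integral>\<^sup>+ z. ennreal (r1 (fst z) * indicator S (fst z)) * ennreal (r2 (snd z) * indicator T (snd z)) \<partial>(P \<Otimes>\<^sub>M Q))
        = ennreal (R1 S) * ennreal (R2 T)"
      by (subst nn_integral_prod_split[OF sfQ]) (auto simp: int_r1 int_r2)
    ultimately show ?thesis by simp
  qed
  also have "\<dots> = ennreal ((\<Sum>i\<in>I. w i * measure P (A i \<inter> S) * measure Q (A i \<inter> T)) + (1/D) * R1 S * R2 T)"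
  proof -
    have 1: "(\<Sum>i\<in>I. ennreal (w i * measure P (A i \<inter> S)) * ennreal (measure Q (A i \<inter> T)))
       = ennreal (\<Sum>i\<in>I. w i * measure P (A i \<inter> S) * measure Q (A i \<inter> T))"
      by (subst sum_ennreal[symmetric]) (auto simp: ennreal_mult w_nn intro!: sum.cong)
    have 2: "ennreal (1/D) * (ennreal (R1 S) * ennreal (R2 T)) = ennreal ((1/D) * R1 S * R2 T)"
      using D_nn R1_nn[of S] R2_nn[of T]
      by (simp only: ennreal_mult[symmetric] mult_nonneg_nonneg divide_nonneg_nonneg zero_le_one mult.assoc)
    show ?thesis unfolding 1 2
      by (rule ennreal_plus[symmetric]) (auto intro!: sum_nonneg mult_nonneg_nonneg simp: w_nn D_nn R1_nn R2_nn)
  qed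
  finally show ?thesis .
qed

lemma R1_UNIV: "R1 UNIV = D"
  unfolding R1_def D_eq1 by (simp add: a_def[symmetric] c1a)
lemma R2_UNIV: "R2 UNIV = D"
  unfolding R2_def D_eq2 by (simp add: b_def[symmetric] c2b)

lemma meascp[simp]: "measurable cp M = measurable (borel \<Otimes>\<^sub>M borel) M"
  by (rule measurable_cong_sets[OF sets_cp refl])

lemma cp_fst: "distr cp borel fst = P"
proof (rule measure_eqI)
  show "sets (distr cp borel fst) = sets P" by (simp add: setsP)
  fix S assume "S \<in> sets (distr cp borel fst)"
  hence S[measurable]: "S \<in> sets borel" by simp
  have "emeasure (distr cp borel fst) S = emeasure cp (S \<times> UNIV)"
    by (subst emeasure_distr) (auto simp: vimage_fst)
  also have "\<dots> = ennreal (measure P S)"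
  proof -
    have "(\<Sum>i\<in>I. w i * measure P (A i \<inter> S) * measure Q (A i \<inter> UNIV)) + 1 / D * R1 S * R2 UNIV
        = (\<Sum>i\<in>I. measure P (A i \<inter> S)) + measure P (Oc \<inter> S)"
    proof -
      have key: "(\<Sum>i\<in>I. mn i / (a i * b i) * measure P (A i \<inter> S) * b i)
          + 1 / (1 - (\<Sum>i\<in>I. mn i)) * ((\<Sum>i\<in>I. (1 - mn i / a i) * measure P (A i \<inter> S)) + measure P (Oc \<inter> S)) * (1 - (\<Sum>i\<in>I. mn i))
          = (\<Sum>i\<in>I. measure P (A i \<inter> S)) + measure P (Oc \<inter> S)"
        by (rule marg_id[where ao="measure P Oc"])
           (use sumaP[unfolded a_def] in \<open>auto simp: finI a_nn b_nn mn_def a_def setsP intro!: finite_measure.finite_measure_mono[OF fmP]\<close>)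
      show ?thesis unfolding R2_UNIV R1_def using key by (simp add: w_def c1_def D_def b_def)
    qed
    then show ?thesis using cp_rect[OF S, of UNIV] splitP[OF S] by simp
  qed
  also have "\<dots> = emeasure P S" using S by (simp add: finite_measure.emeasure_eq_measure[OF fmP] setsP)
  finally show "emeasure (distr cp borel fst) S = emeasure P S" .
qed

lemma cp_snd: "distr cp borel snd = Q"
proof (rule measure_eqI)
  show "sets (distr cp borel snd) = sets Q" by (simp add: setsQ)
  fix S assume "S \<in> sets (distr cp borel snd)"
  hence S[measurable]: "S \<in> sets borel" by simp
  have "emeasure (distr cp borel snd) S = emeasure cp (UNIV \<times> S)"
    by (subst emeasure_distr) (auto simp: vimage_snd)
  also have "\<dots> = ennreal (measure Q S)"
  proof -
    have "(\<Sum>i\<in>I. w i * measure P (A i \<inter> UNIV) * measure Q (A i \<inter> S)) + 1 / D * R1 UNIV * R2 S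
        = (\<Sum>i\<in>I. measure Q (A i \<inter> S)) + measure Q (Oc \<inter> S)"
    proof -
      have key: "(\<Sum>i\<in>I. mn i / (b i * a i) * measure Q (A i \<inter> S) * a i)
          + 1 / (1 - (\<Sum>i\<in>I. mn i)) * ((\<Sum>i\<in>I. (1 - mn i / b i) * measure Q (A i \<inter> S)) + measure Q (Oc \<inter> S)) * (1 - (\<Sum>i\<in>I. mn i))
          = (\<Sum>i\<in>I. measure Q (A i \<inter> S)) + measure Q (Oc \<inter> S)"
        by (rule marg_id[where ao="measure Q Oc"])
           (use sumbQ[unfolded b_def] in \<open>auto simp: finI a_nn b_nn mn_def b_def setsQ min.commute intro!: finite_measure.finite_measure_mono[OF fmQ]\<close>)
      have t1: "(\<Sum>i\<in>I. w i * measure P (A i \<inter> UNIV) * measure Q (A i \<inter> S))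
          = (\<Sum>i\<in>I. mn i / (b i * a i) * measure Q (A i \<inter> S) * a i)"
        by (intro sum.cong refl) (simp add: w_def a_def ac_simps)
      have t2: "1 / D * D * R2 S = 1 / D * R2 S * D" by (simp only: mult.assoc mult.commute[of D])
      show ?thesis unfolding R1_UNIV t1 t2 using key by (simp only: R2_def c2_def D_def)
    qed
    then show ?thesis using cp_rect[OF _ S, of UNIV] splitQ[OF S] by simp
  qed
  also have "\<dots> = emeasure Q S" using S by (simp add: finite_measure.emeasure_eq_measure[OF fmQ] setsQ)
  finally show "emeasure (distr cp borel snd) S = emeasure Q S" .
qed

lemma cp_prob: "prob_space cp"
proof
  have "emeasure cp (space cp) = emeasure (distr cp borel fst) UNIV"
    by (subst emeasure_distr) auto
  also have "\<dots> = 1" using cp_fst prob_space.emeasure_space_1[OF probP] sets_eq_imp_space_eq[OF setsP] by simp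
  finally show "emeasure cp (space cp) = 1" .
qed

lemma cp_coupling: "cp \<in> couplings P Q"
  unfolding couplings_def using cp_prob cp_fst cp_snd sets_cp by auto

end

context cplg begin

lemma H_cost_pw:
  assumes p: "p \<ge> 1" and eta: "\<And>i x y. i \<in> I \<Longrightarrow> x \<in> A i \<Longrightarrow> y \<in> A i \<Longrightarrow> norm (x - y) \<le> \<eta>"
  shows "H x y * norm (x - y) powr p \<le> (\<Sum>i\<in>I. w i * \<eta> powr p * (indicator (A i) x * indicator (A i) y))
     + (2 powr (p - 1) / D) * (r1 x * norm x powr p * r2 y + r1 x * (r2 y * norm y powr p))"
proof -
  have "H x y * norm (x - y) powr p = (\<Sum>i\<in>I. w i * (indicator (A i) x * indicator (A i) y) * norm (x - y) powr p)
     + (r1 x * r2 y / D) * norm (x - y) powr p"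
    by (simp add: H_def sum_distrib_right sum_distrib_left algebra_simps)
  also have "\<dots> \<le> (\<Sum>i\<in>I. w i * \<eta> powr p * (indicator (A i) x * indicator (A i) y))
     + (r1 x * r2 y / D) * (2 powr (p - 1) * (norm x powr p + norm y powr p))"
  proof (rule add_mono)
    show "(\<Sum>i\<in>I. w i * (indicator (A i) x * indicator (A i) y) * norm (x - y) powr p)
        \<le> (\<Sum>i\<in>I. w i * \<eta> powr p * (indicator (A i) x * indicator (A i) y))"
    proof (rule sum_mono)
      fix i assume i: "i \<in> I"
      show "w i * (indicator (A i) x * indicator (A i) y) * norm (x - y) powr p
          \<le> w i * \<eta> powr p * (indicator (A i) x * indicator (A i) y)"
      proof (cases "x \<in> A i \<and> y \<in> A i")
        case True
        have "norm (x - y) powr p \<le> \<eta> powr p" using eta[OF i] True p by (intro powr_mono2) auto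
        then show ?thesis using True w_nn[of i] by (simp add: mult_left_mono)
      qed (auto simp: indicator_def)
    qed
    have "norm (x - y) powr p \<le> (norm x + norm y) powr p"
      using p by (intro powr_mono2) (auto simp: norm_triangle_ineq4)
    also have "\<dots> \<le> 2 powr (p - 1) * (norm x powr p + norm y powr p)"
      using p by (intro powr_sum_le) auto
    finally show "(r1 x * r2 y / D) * norm (x - y) powr p \<le> (r1 x * r2 y / D) * (2 powr (p - 1) * (norm x powr p + norm y powr p))"
      by (intro mult_left_mono) (auto simp: r1_nn r2_nn D_nn)
  qed
  also have "\<dots> = (\<Sum>i\<in>I. w i * \<eta> powr p * (indicator (A i) x * indicator (A i) y))
     + (2 powr (p - 1) / D) * (r1 x * norm x powr p * r2 y + r1 x * (r2 y * norm y powr p))"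
    by (simp add: algebra_simps)
  finally show ?thesis .
qed

lemma wab_le: "w i * a i * b i \<le> mn i"
  using a_nn[of i] b_nn[of i] mn_nn[of i] by (cases "a i * b i = 0") (auto simp: w_def)

lemma sum_wab_le: "(\<Sum>i\<in>I. w i * a i * b i) \<le> 1"
proof -
  have "(\<Sum>i\<in>I. w i * a i * b i) \<le> (\<Sum>i\<in>I. mn i)" by (intro sum_mono wab_le)
  also have "\<dots> \<le> 1" using D_nn by (simp add: D_def)
  finally show ?thesis .
qed

lemma cost_le:
  assumes p: "p \<ge> 1" and eta: "\<And>i x y. i \<in> I \<Longrightarrow> x \<in> A i \<Longrightarrow> y \<in> A i \<Longrightarrow> norm (x - y) \<le> \<eta>"
  shows "(\<integral>\<^sup>+ z. ennreal (norm (fst z - snd z) powr p) \<partial>cp) \<le> ennreal (\<eta> powr p) + ennreal (2 powr (p-1)) *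
     ((\<integral>\<^sup>+ x. ennreal (r1 x * norm x powr p) \<partial>P) + (\<integral>\<^sup>+ y. ennreal (r2 y * norm y powr p) \<partial>Q))"
proof -
  define J1 where "J1 = (\<integral>\<^sup>+ x. ennreal (r1 x * norm x powr p) \<partial>P)"
  define J2 where "J2 = (\<integral>\<^sup>+ y. ennreal (r2 y * norm y powr p) \<partial>Q)"
  define c where "c = 2 powr (p - 1) / D"
  have c0: "c \<ge> 0" using D_nn by (simp add: c_def)
  have pw: "ennreal (H x y) * ennreal (norm (x - y) powr p) \<le>
     (\<Sum>i\<in>I. ennreal (w i * \<eta> powr p * indicator (A i) x) * ennreal (indicator (A i) y))
     + ennreal c * (ennreal (r1 x * norm x powr p) * ennreal (r2 y) + ennreal (r1 x) * ennreal (r2 y * norm y powr p))" for x y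
  proof -
    have "ennreal (H x y) * ennreal (norm (x - y) powr p) = ennreal (H x y * norm (x - y) powr p)"
      by (simp add: ennreal_mult H_nn)
    also have "\<dots> \<le> ennreal ((\<Sum>i\<in>I. w i * \<eta> powr p * (indicator (A i) x * indicator (A i) y))
     + c * (r1 x * norm x powr p * r2 y + r1 x * (r2 y * norm y powr p)))"
      unfolding c_def by (rule ennreal_leI[OF H_cost_pw[OF p eta]])
    also have "\<dots> = ennreal (\<Sum>i\<in>I. w i * \<eta> powr p * (indicator (A i) x * indicator (A i) y))
     + ennreal (c * (r1 x * norm x powr p * r2 y + r1 x * (r2 y * norm y powr p)))"
      by (intro ennreal_plus sum_nonneg mult_nonneg_nonneg add_nonneg_nonneg) (auto simp: w_nn c0 r1_nn r2_nn)
    also have "ennreal (\<Sum>i\<in>I. w i * \<eta> powr p * (indicator (A i) x * indicator (A i) y))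
        = (\<Sum>i\<in>I. ennreal (w i * \<eta> powr p * indicator (A i) x) * ennreal (indicator (A i) y))"
      by (subst sum_ennreal[symmetric]) (auto simp: w_nn ennreal_mult[symmetric] mult.assoc intro!: sum.cong)
    also have "ennreal (c * (r1 x * norm x powr p * r2 y + r1 x * (r2 y * norm y powr p)))
        = ennreal c * (ennreal (r1 x * norm x powr p) * ennreal (r2 y) + ennreal (r1 x) * ennreal (r2 y * norm y powr p))"
      using c0 r1_nn[of x] r2_nn[of y]
      by (simp add: ennreal_mult ennreal_plus[symmetric] mult_nonneg_nonneg add_nonneg_nonneg)
    finally show ?thesis .
  qed
  have "(\<integral>\<^sup>+ z. ennreal (norm (fst z - snd z) powr p) \<partial>cp)
      = (\<integral>\<^sup>+ z. ennreal (H (fst z) (snd z)) * ennreal (norm (fst z - snd z) powr p) \<partial>(P \<Otimes>\<^sub>M Q))"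
    unfolding cp_def by (rule nn_integral_density) auto
  also have "\<dots> \<le> (\<integral>\<^sup>+ z. (\<Sum>i\<in>I. ennreal (w i * \<eta> powr p * indicator (A i) (fst z)) * ennreal (indicator (A i) (snd z)))
     + ennreal c * (ennreal (r1 (fst z) * norm (fst z) powr p) * ennreal (r2 (snd z)) + ennreal (r1 (fst z)) * ennreal (r2 (snd z) * norm (snd z) powr p)) \<partial>(P \<Otimes>\<^sub>M Q))"
    by (intro nn_integral_mono pw)
  also have "\<dots> = (\<Sum>i\<in>I. (\<integral>\<^sup>+ z. ennreal (w i * \<eta> powr p * indicator (A i) (fst z)) * ennreal (indicator (A i) (snd z)) \<partial>(P \<Otimes>\<^sub>M Q)))
     + ennreal c * ((\<integral>\<^sup>+ z. ennreal (r1 (fst z) * norm (fst z) powr p) * ennreal (r2 (snd z)) \<partial>(P \<Otimes>\<^sub>M Q))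
        + (\<integral>\<^sup>+ z. ennreal (r1 (fst z)) * ennreal (r2 (snd z) * norm (snd z) powr p) \<partial>(P \<Otimes>\<^sub>M Q)))"
    by (subst nn_integral_add, simp, simp, subst nn_integral_sum, simp, subst nn_integral_cmult, simp,
        subst nn_integral_add, simp_all)
  also have "\<dots> = (\<Sum>i\<in>I. ennreal (w i * \<eta> powr p * a i) * ennreal (b i)) + ennreal c * (J1 * ennreal D + ennreal D * J2)"
  proof -
    have "(\<integral>\<^sup>+ z. ennreal (w i * \<eta> powr p * indicator (A i) (fst z)) * ennreal (indicator (A i) (snd z)) \<partial>(P \<Otimes>\<^sub>M Q))
        = ennreal (w i * \<eta> powr p * a i) * ennreal (b i)" for i
      by (subst nn_integral_prod_split[OF sfQ])
         (auto simp: ennreal_mult' ennreal_indicator w_nn nn_integral_cmult_indicator setsP setsQ a_def b_def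
            finite_measure.emeasure_eq_measure[OF fmP] finite_measure.emeasure_eq_measure[OF fmQ])
    moreover have "(\<integral>\<^sup>+ y. ennreal (r2 y) \<partial>Q) = ennreal D"
      using int_r2[of UNIV] by (simp add: R2_UNIV)
    moreover have "(\<integral>\<^sup>+ y. ennreal (r1 y) \<partial>P) = ennreal D"
      using int_r1[of UNIV] by (simp add: R1_UNIV)
    ultimately have e2: "(\<integral>\<^sup>+ z. ennreal (r1 (fst z) * norm (fst z) powr p) * ennreal (r2 (snd z)) \<partial>(P \<Otimes>\<^sub>M Q)) = J1 * ennreal D"
        and e3: "(\<integral>\<^sup>+ z. ennreal (r1 (fst z)) * ennreal (r2 (snd z) * norm (snd z) powr p) \<partial>(P \<Otimes>\<^sub>M Q)) = ennreal D * J2"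
      by (subst nn_integral_prod_split[OF sfQ], simp, simp, simp add: J1_def J2_def)+
    show ?thesis using \<open>\<And>i. _ = ennreal (w i * \<eta> powr p * a i) * ennreal (b i)\<close> e2 e3 by simp
  qed
  also have "\<dots> \<le> ennreal (\<eta> powr p) + ennreal (2 powr (p-1)) * (J1 + J2)"
  proof (rule add_mono)
    have "(\<Sum>i\<in>I. ennreal (w i * \<eta> powr p * a i) * ennreal (b i)) = ennreal (\<eta> powr p * (\<Sum>i\<in>I. w i * a i * b i))"
    proof -
      have "ennreal (w i * \<eta> powr p * a i) * ennreal (b i) = ennreal (\<eta> powr p * (w i * a i * b i))" for i
        using w_nn[of i] a_nn[of i] b_nn[of i] by (simp add: ennreal_mult[symmetric] ac_simps)
      then have "(\<Sum>i\<in>I. ennreal (w i * \<eta> powr p * a i) * ennreal (b i)) = (\<Sum>i\<in>I. ennreal (\<eta> powr p * (w i * a i * b i)))"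
        by simp
      also have "\<dots> = ennreal (\<Sum>i\<in>I. \<eta> powr p * (w i * a i * b i))"
        by (intro sum_ennreal) (auto simp: w_nn a_nn b_nn)
      finally show ?thesis by (simp add: sum_distrib_left)
    qed
    also have "\<dots> \<le> ennreal (\<eta> powr p)"
      using sum_wab_le by (intro ennreal_leI mult_right_le_one_le) (auto intro!: sum_nonneg simp: w_nn a_nn b_nn)
    finally show "(\<Sum>i\<in>I. ennreal (w i * \<eta> powr p * a i) * ennreal (b i)) \<le> ennreal (\<eta> powr p)" .
    have "ennreal c * (J1 * ennreal D + ennreal D * J2) = ennreal (c * D) * (J1 + J2)"
      using c0 D_nn by (simp add: ennreal_mult distrib_left distrib_right ac_simps)
    also have "\<dots> \<le> ennreal (2 powr (p-1)) * (J1 + J2)"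
      using D_nn by (intro mult_right_mono ennreal_leI) (auto simp: c_def)
    finally show "ennreal c * (J1 * ennreal D + ennreal D * J2) \<le> ennreal (2 powr (p-1)) * (J1 + J2)" .
  qed
  finally show ?thesis unfolding J1_def J2_def .
qed

end

context cplg begin

lemma J1_le:
  assumes p: "p \<ge> 0" and Rb: "Rb \<ge> 0" "\<And>i x. i \<in> I \<Longrightarrow> x \<in> A i \<Longrightarrow> norm x \<le> Rb"
  shows "(\<integral>\<^sup>+ x. ennreal (r1 x * norm x powr p) \<partial>P) \<le> ennreal (Rb powr p * (\<Sum>i\<in>I. a i - mn i))
     + (\<integral>\<^sup>+ x. ennreal (indicator Oc x * norm x powr p) \<partial>P)"
proof -
  have pw: "ennreal (r1 x * norm x powr p) \<le> ennreal (\<Sum>i\<in>I. (c1 i * Rb powr p) * indicator (A i) x) + ennreal (indicator Oc x * norm x powr p)" for x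
  proof -
    have "r1 x * norm x powr p = (\<Sum>i\<in>I. c1 i * (indicator (A i) x * norm x powr p)) + indicator Oc x * norm x powr p"
      by (simp add: r1_def sum_distrib_right sum_distrib_left algebra_simps)
    also have "\<dots> \<le> (\<Sum>i\<in>I. (c1 i * Rb powr p) * indicator (A i) x) + indicator Oc x * norm x powr p"
    proof (intro add_mono sum_mono order_refl)
      fix i assume i: "i \<in> I"
      show "c1 i * (indicator (A i) x * norm x powr p) \<le> (c1 i * Rb powr p) * indicator (A i) x"
      proof (cases "x \<in> A i")
        case True
        have "norm x powr p \<le> Rb powr p" using Rb(2)[OF i True] p by (intro powr_mono2) auto
        then show ?thesis using True c1_nn[of i] by (simp add: mult_left_mono)
      qed simp
    qed
    finally show ?thesis
      by (subst ennreal_plus[symmetric]) (auto intro!: ennreal_leI sum_nonneg mult_nonneg_nonneg simp: c1_nn)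
  qed
  have "(\<integral>\<^sup>+ x. ennreal (r1 x * norm x powr p) \<partial>P) \<le> (\<integral>\<^sup>+ x. ennreal (\<Sum>i\<in>I. (c1 i * Rb powr p) * indicator (A i) x) + ennreal (indicator Oc x * norm x powr p) \<partial>P)"
    by (intro nn_integral_mono pw)
  also have "\<dots> = ennreal (\<Sum>i\<in>I. (c1 i * Rb powr p) * measure P (A i)) + (\<integral>\<^sup>+ x. ennreal (indicator Oc x * norm x powr p) \<partial>P)"
    by (subst nn_integral_add) (auto simp: nn_int_ind_sum[OF fmP] setsP c1_nn)
  also have "(\<Sum>i\<in>I. (c1 i * Rb powr p) * measure P (A i)) = Rb powr p * (\<Sum>i\<in>I. a i - mn i)"
    by (simp add: sum_distrib_left a_def[symmetric] c1a[symmetric] ac_simps)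
  finally show ?thesis .
qed

lemma J2_le:
  assumes p: "p \<ge> 0" and Rb: "Rb \<ge> 0" "\<And>i x. i \<in> I \<Longrightarrow> x \<in> A i \<Longrightarrow> norm x \<le> Rb"
  shows "(\<integral>\<^sup>+ x. ennreal (r2 x * norm x powr p) \<partial>Q) \<le> ennreal (Rb powr p * (\<Sum>i\<in>I. b i - mn i))
     + (\<integral>\<^sup>+ x. ennreal (indicator Oc x * norm x powr p) \<partial>Q)"
proof -
  have pw: "ennreal (r2 x * norm x powr p) \<le> ennreal (\<Sum>i\<in>I. (c2 i * Rb powr p) * indicator (A i) x) + ennreal (indicator Oc x * norm x powr p)" for x
  proof -
    have "r2 x * norm x powr p = (\<Sum>i\<in>I. c2 i * (indicator (A i) x * norm x powr p)) + indicator Oc x * norm x powr p"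
      by (simp add: r2_def sum_distrib_right sum_distrib_left algebra_simps)
    also have "\<dots> \<le> (\<Sum>i\<in>I. (c2 i * Rb powr p) * indicator (A i) x) + indicator Oc x * norm x powr p"
    proof (intro add_mono sum_mono order_refl)
      fix i assume i: "i \<in> I"
      show "c2 i * (indicator (A i) x * norm x powr p) \<le> (c2 i * Rb powr p) * indicator (A i) x"
      proof (cases "x \<in> A i")
        case True
        have "norm x powr p \<le> Rb powr p" using Rb(2)[OF i True] p by (intro powr_mono2) auto
        then show ?thesis using True c2_nn[of i] by (simp add: mult_left_mono)
      qed simp
    qed
    finally show ?thesis
      by (subst ennreal_plus[symmetric]) (auto intro!: ennreal_leI sum_nonneg mult_nonneg_nonneg simp: c2_nn)
  qed
  have "(\<integral>\<^sup>+ x. ennreal (r2 x * norm x powr p) \<partial>Q) \<le> (\<integral>\<^sup>+ x. ennreal (\<Sum>i\<in>I. (c2 i * Rb powr p) * indicator (A i) x) + ennreal (indicator Oc x * norm x powr p) \<partial>Q)"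
    by (intro nn_integral_mono pw)
  also have "\<dots> = ennreal (\<Sum>i\<in>I. (c2 i * Rb powr p) * measure Q (A i)) + (\<integral>\<^sup>+ x. ennreal (indicator Oc x * norm x powr p) \<partial>Q)"
    by (subst nn_integral_add) (auto simp: nn_int_ind_sum[OF fmQ] setsQ c2_nn)
  also have "(\<Sum>i\<in>I. (c2 i * Rb powr p) * measure Q (A i)) = Rb powr p * (\<Sum>i\<in>I. b i - mn i)"
    by (simp add: sum_distrib_left b_def[symmetric] c2b[symmetric] ac_simps)
  finally show ?thesis .
qed

lemma W_bound:
  assumes p: "p \<ge> 1" and eta: "\<And>i x y. i \<in> I \<Longrightarrow> x \<in> A i \<Longrightarrow> y \<in> A i \<Longrightarrow> norm (x - y) \<le> \<eta>"
    and Rb: "Rb \<ge> 0" "\<And>i x. i \<in> I \<Longrightarrow> x \<in> A i \<Longrightarrow> norm x \<le> Rb"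
  shows "wasserstein_pow p P Q \<le> ennreal (\<eta> powr p + 2 powr (p - 1) * Rb powr p * (\<Sum>i\<in>I. \<bar>a i - b i\<bar>))
     + ennreal (2 powr (p - 1)) * ((\<integral>\<^sup>+ x. ennreal (indicator Oc x * norm x powr p) \<partial>P) + (\<integral>\<^sup>+ x. ennreal (indicator Oc x * norm x powr p) \<partial>Q))"
proof -
  define TP where "TP = (\<integral>\<^sup>+ x. ennreal (indicator Oc x * norm x powr p) \<partial>P)"
  define TQ where "TQ = (\<integral>\<^sup>+ x. ennreal (indicator Oc x * norm x powr p) \<partial>Q)"
  have "wasserstein_pow p P Q \<le> (\<integral>\<^sup>+ z. ennreal (norm (fst z - snd z) powr p) \<partial>cp)"
    unfolding wasserstein_pow_def by (rule INF_lower[OF cp_coupling])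
  also have "\<dots> \<le> ennreal (\<eta> powr p) + ennreal (2 powr (p-1)) *
     ((\<integral>\<^sup>+ x. ennreal (r1 x * norm x powr p) \<partial>P) + (\<integral>\<^sup>+ y. ennreal (r2 y * norm y powr p) \<partial>Q))"
    by (rule cost_le[OF p eta])
  also have "\<dots> \<le> ennreal (\<eta> powr p) + ennreal (2 powr (p-1)) *
     ((ennreal (Rb powr p * (\<Sum>i\<in>I. a i - mn i)) + TP) + (ennreal (Rb powr p * (\<Sum>i\<in>I. b i - mn i)) + TQ))"
    unfolding TP_def TQ_def using p
    by (intro add_mono order_refl mult_left_mono J1_le J2_le Rb) auto
  also have "\<dots> = ennreal (\<eta> powr p) + ennreal (2 powr (p-1) * (Rb powr p * (\<Sum>i\<in>I. \<bar>a i - b i\<bar>))) + ennreal (2 powr (p-1)) * (TP + TQ)"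
  proof -
    have s: "(\<Sum>i\<in>I. a i - mn i) + (\<Sum>i\<in>I. b i - mn i) = (\<Sum>i\<in>I. \<bar>a i - b i\<bar>)"
      by (subst sum.distrib[symmetric]) (auto simp: mn_def intro!: sum.cong)
    have n1: "(\<Sum>i\<in>I. a i - mn i) \<ge> 0" "(\<Sum>i\<in>I. b i - mn i) \<ge> 0"
      by (auto intro!: sum_nonneg simp: mn_le_a mn_le_b)
    have "ennreal (Rb powr p * (\<Sum>i\<in>I. a i - mn i)) + ennreal (Rb powr p * (\<Sum>i\<in>I. b i - mn i))
        = ennreal (Rb powr p * (\<Sum>i\<in>I. \<bar>a i - b i\<bar>))"
      using n1 by (subst ennreal_plus[symmetric]) (auto simp: s[symmetric] distrib_left)
    moreover have "ennreal (2 powr (p-1)) * ennreal (Rb powr p * (\<Sum>i\<in>I. \<bar>a i - b i\<bar>))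
       = ennreal (2 powr (p-1) * (Rb powr p * (\<Sum>i\<in>I. \<bar>a i - b i\<bar>)))"
      by (simp add: ennreal_mult)
    ultimately show ?thesis by (simp add: distrib_left distrib_right ac_simps)
  qed
  also have "\<dots> = ennreal (\<eta> powr p + 2 powr (p - 1) * Rb powr p * (\<Sum>i\<in>I. \<bar>a i - b i\<bar>)) + ennreal (2 powr (p-1)) * (TP + TQ)"
    by (subst ennreal_plus) (auto simp: mult.assoc)
  finally show ?thesis unfolding TP_def TQ_def .
qed

end

lemma (in prob_space) emp_dev:
  fixes X :: "nat \<Rightarrow> 'a \<Rightarrow> 'c::euclidean_space"
  assumes Xm[measurable]: "\<And>k. X k \<in> borel_measurable M" and ind: "indep_vars (\<lambda>_. borel) X UNIV"
    and dist: "\<And>k. distr M borel (X k) = \<mu>" and S[measurable]: "S \<in> sets borel" and N: "N \<ge> 1"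
  shows "(\<integral>\<^sup>+\<omega>. ennreal \<bar>(\<Sum>k\<in>{1..N}. indicator S (X k \<omega>)) / real N - measure \<mu> S\<bar> \<partial>M) \<le> ennreal (1 / sqrt N)"
proof -
  define q where "q = measure \<mu> S"
  define Y where "Y k \<omega> = indicator S (X k \<omega>) - q" for k \<omega>
  define K where "K = {1..N}"
  define s where "s = sqrt (real N)"
  have s0: "s > 0" using N by (simp add: s_def)
  have ss: "s * s = real N" by (simp add: s_def)
  interpret mu: prob_space \<mu> using prob_space_distr[OF Xm[of 0]] dist[of 0] by simp
  have spmu: "space \<mu> = UNIV" using dist[of 0] by (metis space_distr space_borel)
  have q01: "0 \<le> q" "q \<le> 1" by (auto simp: q_def)
  have Ym[measurable]: "Y k \<in> borel_measurable M" for k unfolding Y_def by measurable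
  have Yb: "\<bar>Y k \<omega>\<bar> \<le> 1" for k \<omega> using q01 by (auto simp: Y_def indicator_def)
  have Yint: "integrable M (Y k)" for k
    by (rule integrable_const_bound[where B=1]) (use Yb in auto)
  have YYint: "integrable M (\<lambda>\<omega>. Y k \<omega> * Y l \<omega>)" for k l
  proof (rule integrable_const_bound[where B=1])
    show "AE x in M. norm (Y k x * Y l x) \<le> 1"
      using Yb[of k] Yb[of l] by (auto simp: abs_mult intro!: mult_le_one)
  qed simp
  have EY: "(\<integral>\<omega>. Y k \<omega> \<partial>M) = 0" for k
  proof -
    have "(\<integral>\<omega>. indicator S (X k \<omega>) \<partial>M) = (\<integral>x. (indicator S x :: real) \<partial>distr M borel (X k))"
      by (rule integral_distr[symmetric]) auto
    also have "\<dots> = q" using dist[of k] by (simp add: q_def spmu)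
    moreover have "integrable M (\<lambda>\<omega>. indicator S (X k \<omega>) :: real)"
      by (rule integrable_const_bound[where B=1]) auto
    ultimately show ?thesis unfolding Y_def
      by (subst Bochner_Integration.integral_diff) (auto simp: prob_space)
  qed
  have indY: "indep_vars (\<lambda>_. borel) Y UNIV"
  proof -
    have e: "Y = (\<lambda>i x. indicator S (X i x) - q)" by (simp add: Y_def fun_eq_iff)
    show ?thesis unfolding e
      using indep_vars_compose2[OF ind, of "\<lambda>i x. indicator S x - q" "\<lambda>_. borel"] by simp
  qed
  have EYY: "(\<integral>\<omega>. Y k \<omega> * Y l \<omega> \<partial>M) = 0" if "k \<noteq> l" for k l
  proof -
    have "indep_vars (\<lambda>_. borel) Y {k, l}" by (rule indep_vars_subset[OF indY]) auto
    then have "(\<integral>\<omega>. (\<Prod>i\<in>{k,l}. Y i \<omega>) \<partial>M) = (\<Prod>i\<in>{k,l}. \<integral>\<omega>. Y i \<omega> \<partial>M)"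
      by (intro indep_vars_lebesgue_integral) (auto simp: Yint)
    then show ?thesis using that by (simp add: EY)
  qed
  have EZ2: "(\<integral>\<omega>. (\<Sum>k\<in>K. Y k \<omega>)\<^sup>2 \<partial>M) \<le> real N"
  proof -
    have "(\<integral>\<omega>. (\<Sum>k\<in>K. Y k \<omega>)\<^sup>2 \<partial>M) = (\<integral>\<omega>. (\<Sum>k\<in>K. \<Sum>l\<in>K. Y k \<omega> * Y l \<omega>) \<partial>M)"
      by (simp add: power2_eq_square sum_product)
    also have "\<dots> = (\<Sum>k\<in>K. \<Sum>l\<in>K. \<integral>\<omega>. Y k \<omega> * Y l \<omega> \<partial>M)"
      by (simp add: YYint)
    also have "\<dots> = (\<Sum>k\<in>K. \<integral>\<omega>. Y k \<omega> * Y k \<omega> \<partial>M)"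
    proof (intro sum.cong refl)
      fix k assume k: "k \<in> K"
      have "(\<Sum>l\<in>K. \<integral>\<omega>. Y k \<omega> * Y l \<omega> \<partial>M) = (\<Sum>l\<in>K. if l = k then \<integral>\<omega>. Y k \<omega> * Y k \<omega> \<partial>M else 0)"
        by (intro sum.cong refl) (auto simp: EYY)
      also have "\<dots> = (\<integral>\<omega>. Y k \<omega> * Y k \<omega> \<partial>M)" using k by (simp add: K_def)
      finally show "(\<Sum>l\<in>K. \<integral>\<omega>. Y k \<omega> * Y l \<omega> \<partial>M) = (\<integral>\<omega>. Y k \<omega> * Y k \<omega> \<partial>M)" .
    qed
    also have "\<dots> \<le> (\<Sum>k\<in>K. 1)"
    proof (intro sum_mono)
      fix k
      have "(\<integral>\<omega>. Y k \<omega> * Y k \<omega> \<partial>M) \<le> (\<integral>\<omega>. 1 \<partial>M)"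
      proof (intro integral_mono YYint)
        fix x
        have "\<bar>Y k x\<bar> * \<bar>Y k x\<bar> \<le> 1" by (rule mult_le_one) (auto simp: Yb)
        then show "Y k x * Y k x \<le> 1" by (simp add: abs_mult_self_eq)
      qed simp
      then show "(\<integral>\<omega>. Y k \<omega> * Y k \<omega> \<partial>M) \<le> 1" by (simp add: prob_space)
    qed
    also have "\<dots> = real N" by (simp add: K_def)
    finally show ?thesis .
  qed
  have pw: "\<bar>(\<Sum>k\<in>{1..N}. indicator S (X k \<omega>)) / real N - q\<bar> \<le> ((\<Sum>k\<in>K. Y k \<omega>)\<^sup>2 / s + s) / (2 * real N)" for \<omega>
  proof -
    define Z where "Z = (\<Sum>k\<in>K. Y k \<omega>)"
    have "(\<Sum>k\<in>{1..N}. indicator S (X k \<omega>)) / real N - q = Z / real N"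
      using N by (simp add: Z_def Y_def K_def sum_subtractf field_simps)
    moreover have "\<bar>Z\<bar> \<le> (Z\<^sup>2 / s + s) / 2"
    proof -
      have "0 \<le> (\<bar>Z\<bar> - s)\<^sup>2" by simp
      hence "2 * s * \<bar>Z\<bar> \<le> Z\<^sup>2 + s * s" by (simp add: power2_eq_square algebra_simps)
      thus ?thesis using s0 by (simp add: field_simps power2_eq_square)
    qed
    ultimately show ?thesis using N by (simp add: Z_def[symmetric] abs_div field_simps)
  qed
  have "(\<integral>\<^sup>+\<omega>. ennreal \<bar>(\<Sum>k\<in>{1..N}. indicator S (X k \<omega>)) / real N - q\<bar> \<partial>M)
      \<le> (\<integral>\<^sup>+\<omega>. ennreal (((\<Sum>k\<in>K. Y k \<omega>)\<^sup>2 / s + s) / (2 * real N)) \<partial>M)"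
    by (intro nn_integral_mono ennreal_leI pw)
  also have "\<dots> = ennreal (\<integral>\<omega>. ((\<Sum>k\<in>K. Y k \<omega>)\<^sup>2 / s + s) / (2 * real N) \<partial>M)"
  proof (rule nn_integral_eq_integral)
    have "integrable M (\<lambda>\<omega>. (\<Sum>k\<in>K. Y k \<omega>)\<^sup>2)"
      by (simp add: power2_eq_square sum_product YYint)
    then show "integrable M (\<lambda>\<omega>. ((\<Sum>k\<in>K. Y k \<omega>)\<^sup>2 / s + s) / (2 * real N))" by simp
  qed (use s0 in auto)
  also have "\<dots> \<le> ennreal (1 / s)"
  proof (rule ennreal_leI)
    have int2: "integrable M (\<lambda>\<omega>. (\<Sum>k\<in>K. Y k \<omega>)\<^sup>2)"
      by (simp add: power2_eq_square sum_product YYint)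
    have "(\<integral>\<omega>. ((\<Sum>k\<in>K. Y k \<omega>)\<^sup>2 / s + s) / (2 * real N) \<partial>M)
        = ((\<integral>\<omega>. (\<Sum>k\<in>K. Y k \<omega>)\<^sup>2 \<partial>M) / s + s) / (2 * real N)"
      using int2 by (simp add: prob_space)
    also have "\<dots> \<le> (real N / s + s) / (2 * real N)"
      using EZ2 s0 N by (intro divide_right_mono add_right_mono divide_right_mono) auto
    also have "\<dots> = 1 / s" using s0 ss N by (simp add: field_simps)
    finally show "(\<integral>\<omega>. ((\<Sum>k\<in>K. Y k \<omega>)\<^sup>2 / s + s) / (2 * real N) \<partial>M) \<le> 1 / s" .
  qed
  finally show ?thesis by (simp add: q_def s_def)
qed

definition gidx :: "nat \<Rightarrow> ('a::euclidean_space \<Rightarrow> int) set" where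
  "gidx K = PiE Basis (\<lambda>_. {- int K..<int K})"
definition gcell :: "nat \<Rightarrow> ('a::euclidean_space \<Rightarrow> int) \<Rightarrow> 'a set" where
  "gcell n k = {x. \<forall>b\<in>Basis. \<lfloor>real n * (x \<bullet> b)\<rfloor> = k b}"

lemma gcell_borel: "gcell n k \<in> sets borel"
proof -
  have "gcell n k = (\<Inter>b\<in>Basis. {x. \<lfloor>real n * (x \<bullet> b)\<rfloor> = k b})" by (auto simp: gcell_def)
  also have "\<dots> \<in> sets borel"
  proof (intro sets.finite_INT)
    fix b :: 'a
    have "(\<lambda>x::'a. \<lfloor>real n * (x \<bullet> b)\<rfloor>) \<in> measurable borel (count_space UNIV)" by measurable
    then have "(\<lambda>x::'a. \<lfloor>real n * (x \<bullet> b)\<rfloor>) -` {k b} \<inter> space borel \<in> sets borel"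
      by (rule measurable_sets) auto
    then show "{x::'a. \<lfloor>real n * (x \<bullet> b)\<rfloor> = k b} \<in> sets borel" by (simp add: vimage_def)
  qed auto
  finally show ?thesis .
qed

lemma gcell_disj: "disjoint_family_on (gcell n) (gidx K)"
  unfolding disjoint_family_on_def
proof (intro ballI impI)
  fix k l :: "'a \<Rightarrow> int" assume k: "k \<in> gidx K" and l: "l \<in> gidx K" and kl: "k \<noteq> l"
  then obtain b where b: "b \<in> Basis" "k b \<noteq> l b"
    unfolding gidx_def by (metis PiE_ext)
  then show "gcell n k \<inter> gcell n l = {}" by (auto simp: gcell_def)
qed

lemma gcell_diam:
  fixes x y :: "'a::euclidean_space"
  assumes n: "n \<ge> 1" and x: "x \<in> gcell n k" and y: "y \<in> gcell n k"
  shows "norm (x - y) \<le> DIM('a) / n"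
proof -
  have *: "\<bar>(x - y) \<bullet> b\<bar> \<le> 1 / n" if b: "b \<in> Basis" for b
  proof -
    have e: "\<lfloor>real n * (x \<bullet> b)\<rfloor> = \<lfloor>real n * (y \<bullet> b)\<rfloor>" using x y b by (auto simp: gcell_def)
    have "\<bar>real n * (x \<bullet> b) - real n * (y \<bullet> b)\<bar> < 1"
      using e by linarith
    hence "real n * \<bar>(x - y) \<bullet> b\<bar> < 1" by (simp add: inner_diff_left right_diff_distrib[symmetric] abs_mult)
    thus ?thesis using n by (simp add: field_simps)
  qed
  have "(\<Sum>b\<in>Basis. \<bar>(x - y) \<bullet> b\<bar>) \<le> (\<Sum>b\<in>(Basis::'a set). 1 / n)" by (intro sum_mono) (use * in auto)
  moreover have "norm (x - y) \<le> (\<Sum>b\<in>Basis. \<bar>(x - y) \<bullet> b\<bar>)" by (rule norm_le_l1)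
  ultimately show ?thesis by simp
qed

lemma gcell_bound:
  fixes x :: "'a::euclidean_space"
  assumes n: "n \<ge> 1" and k: "k \<in> gidx K" and x: "x \<in> gcell n k"
  shows "norm x \<le> DIM('a) * K / n"
proof -
  have *: "\<bar>x \<bullet> b\<bar> \<le> K / n" if b: "b \<in> Basis" for b
  proof -
    have "\<lfloor>real n * (x \<bullet> b)\<rfloor> \<in> {- int K..<int K}" using x k b by (auto simp: gcell_def gidx_def PiE_def)
    hence "- real K \<le> real n * (x \<bullet> b) \<and> real n * (x \<bullet> b) < real K" by auto linarith+
    hence "\<bar>real n * (x \<bullet> b)\<bar> \<le> real K" by linarith
    thus ?thesis using n by (simp add: field_simps abs_mult)
  qed
  have "(\<Sum>b\<in>Basis. \<bar>x \<bullet> b\<bar>) \<le> (\<Sum>b\<in>(Basis::'a set). K / n)" by (intro sum_mono) (use * in auto)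
  with norm_le_l1[of x] show ?thesis by simp
qed

lemma gcell_out:
  assumes n: "n \<ge> 1" and x: "x \<notin> (\<Union>k\<in>gidx K. gcell n k)"
  shows "norm (x::'a::euclidean_space) \<ge> K / n"
proof (rule ccontr)
  assume "\<not> ?thesis"
  hence lt: "norm x < K / n" by simp
  define k where "k = (\<lambda>b\<in>(Basis::'a set). \<lfloor>real n * (x \<bullet> b)\<rfloor>)"
  have "k \<in> gidx K" unfolding gidx_def k_def
  proof (rule restrict_PiE_iff[THEN iffD2], intro ballI)
    fix b :: 'a assume b: "b \<in> Basis"
    have "\<bar>x \<bullet> b\<bar> < K / n" using Basis_le_norm[OF b, of x] lt by linarith
    hence "\<bar>real n * (x \<bullet> b)\<bar> < K" using n by (simp add: field_simps abs_mult)
    thus "\<lfloor>real n * (x \<bullet> b)\<rfloor> \<in> {- int K..<int K}" by auto linarith+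
  qed
  moreover have "x \<in> gcell n k" by (auto simp: gcell_def k_def)
  ultimately show False using x by auto
qed

lemma card_gidx: "card (gidx K :: ('a::euclidean_space \<Rightarrow> int) set) = (2 * K) ^ DIM('a)"
proof -
  have e: "card {- int K..<int K} = 2 * K" by simp
  show ?thesis by (simp only: gidx_def card_PiE finite_Basis e prod_constant)
qed

lemma finite_gidx: "finite (gidx K :: ('a::euclidean_space \<Rightarrow> int) set)"
  by (simp add: gidx_def finite_PiE)

lemma main_bound:
  fixes M :: "'b measure" and X :: "nat \<Rightarrow> 'b \<Rightarrow> 'a::euclidean_space" and \<mu> :: "'a measure" and N n K :: nat
  assumes PM: "prob_space M" and Pmu: "prob_space \<mu>" and Smu: "sets \<mu> = sets borel" and p: "p \<ge> 1"
    and Xm[measurable]: "\<And>k. X k \<in> borel_measurable M"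
    and ind: "prob_space.indep_vars M (\<lambda>_. borel) X UNIV"
    and dist: "\<And>k. distr M borel (X k) = \<mu>" and N: "N \<ge> 1" and n: "n \<ge> 1"
  shows "(\<integral>\<^sup>+\<omega>. wasserstein_pow p (empirical_measure (\<lambda>k. X k \<omega>) N) \<mu> \<partial>M)
     \<le> ennreal ((DIM('a) / n) powr p + 2 powr (p - 1) * (DIM('a) * K / n) powr p * real ((2 * K) ^ DIM('a)) / sqrt N)
       + ennreal (2 powr p) * (\<integral>\<^sup>+ x. ennreal (indicator {x. K / n \<le> norm x} x * norm x powr p) \<partial>\<mu>)"
proof -
  interpret M: prob_space M by fact
  define I where "I = (gidx K :: ('a \<Rightarrow> int) set)"
  define A where "A = (gcell n :: ('a \<Rightarrow> int) \<Rightarrow> 'a set)"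
  have Ab[measurable]: "A k \<in> sets borel" for k by (simp add: A_def gcell_borel)
  define b where "b k = measure \<mu> (A k)" for k
  define af where "af \<omega> k = (\<Sum>j\<in>{1..N}. indicator (A k) (X j \<omega>)) / real N" for \<omega> k
  define G where "G x = ennreal (indicator {x. K / n \<le> norm x} x * norm x powr p)" for x :: 'a
  have Gm[measurable]: "G \<in> borel_measurable borel" unfolding G_def by measurable
  define T where "T = (\<integral>\<^sup>+ x. G x \<partial>\<mu>)"
  define c where "c = 2 powr (p - 1)"
  define Ac where "Ac = (DIM('a) / n) powr p"
  define Bc where "Bc = c * (DIM('a) * K / n) powr p"
  have c0: "c \<ge> 0" and Bc0: "Bc \<ge> 0" by (auto simp: c_def Bc_def)
  have finI: "finite I" by (simp add: I_def finite_gidx)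
  have cardI: "card I = (2 * K) ^ DIM('a)" by (simp add: I_def card_gidx)
  have Oc_le: "indicator (- (\<Union>k\<in>I. A k)) x * norm x powr p \<le> indicator {x. K / n \<le> norm x} x * norm x powr p" for x :: 'a
    using gcell_out[OF n, of x K] by (auto simp: indicator_def I_def A_def)
  have pw: "wasserstein_pow p (empirical_measure (\<lambda>k. X k \<omega>) N) \<mu>
      \<le> ennreal Ac + (\<Sum>k\<in>I. ennreal (Bc * \<bar>af \<omega> k - b k\<bar>)) + ennreal c * ((\<Sum>j\<in>{1..N}. G (X j \<omega>)) / of_nat N) + ennreal c * T" for \<omega>
  proof -
    let ?P = "empirical_measure (\<lambda>k. X k \<omega>) N"
    interpret C: cplg ?P \<mu> I A
    proof (rule cplg.intro)
      show "prob_space ?P" by (rule emp_prob[OF N])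
      show "sets ?P = sets borel" by simp
      show "disjoint_family_on A I" unfolding A_def I_def by (rule gcell_disj)
      show "prob_space \<mu>" by (rule Pmu)
      show "sets \<mu> = sets borel" by (rule Smu)
      show "finite I" by (rule finI)
      show "A i \<in> sets borel" for i by (rule Ab)
    qed
    have W1: "wasserstein_pow p ?P \<mu> \<le> ennreal ((DIM('a) / n) powr p + c * (DIM('a) * K / n) powr p * (\<Sum>i\<in>I. \<bar>C.a i - C.b i\<bar>))
     + ennreal c * ((\<integral>\<^sup>+ x. ennreal (indicator C.Oc x * norm x powr p) \<partial>?P) + (\<integral>\<^sup>+ x. ennreal (indicator C.Oc x * norm x powr p) \<partial>\<mu>))"
      unfolding c_def
    proof (rule C.W_bound[OF p])
      show "norm (x - y) \<le> DIM('a) / n" if "i \<in> I" "x \<in> A i" "y \<in> A i" for i x y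
        using gcell_diam[OF n] that by (simp add: A_def)
      show "norm x \<le> DIM('a) * K / n" if "i \<in> I" "x \<in> A i" for i x
        using gcell_bound[OF n] that by (simp add: A_def I_def)
    qed simp
    have a_eq: "C.a k = af \<omega> k" for k
      by (simp add: C.a_def af_def emp_measure[OF N Ab])
    have s1: "ennreal ((DIM('a) / n) powr p + c * (DIM('a) * K / n) powr p * (\<Sum>i\<in>I. \<bar>C.a i - C.b i\<bar>))
          = ennreal Ac + (\<Sum>k\<in>I. ennreal (Bc * \<bar>af \<omega> k - b k\<bar>))"
    proof -
      have "(DIM('a) / n) powr p + c * (DIM('a) * K / n) powr p * (\<Sum>i\<in>I. \<bar>C.a i - C.b i\<bar>)
          = Ac + (\<Sum>k\<in>I. Bc * \<bar>af \<omega> k - b k\<bar>)"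
        by (simp add: Ac_def Bc_def a_eq C.b_def b_def sum_distrib_left)
      also have "ennreal \<dots> = ennreal Ac + ennreal (\<Sum>k\<in>I. Bc * \<bar>af \<omega> k - b k\<bar>)"
        by (rule ennreal_plus) (auto simp: Ac_def Bc0 intro!: sum_nonneg)
      also have "ennreal (\<Sum>k\<in>I. Bc * \<bar>af \<omega> k - b k\<bar>) = (\<Sum>k\<in>I. ennreal (Bc * \<bar>af \<omega> k - b k\<bar>))"
        by (rule sum_ennreal[symmetric]) (simp add: Bc0)
      finally show ?thesis .
    qed
    have s2: "(\<integral>\<^sup>+ x. ennreal (indicator C.Oc x * norm x powr p) \<partial>?P) \<le> (\<Sum>j\<in>{1..N}. G (X j \<omega>)) / of_nat N"
    proof -
      have "(\<integral>\<^sup>+ x. ennreal (indicator C.Oc x * norm x powr p) \<partial>?P) \<le> (\<integral>\<^sup>+ x. G x \<partial>?P)"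
        unfolding G_def C.Oc_def by (intro nn_integral_mono ennreal_leI Oc_le)
      also have "\<dots> = (\<Sum>j\<in>{1..N}. G (X j \<omega>)) / of_nat N" by (rule emp_nn_integral[OF N Gm])
      finally show ?thesis .
    qed
    have s3: "(\<integral>\<^sup>+ x. ennreal (indicator C.Oc x * norm x powr p) \<partial>\<mu>) \<le> T"
      unfolding T_def G_def C.Oc_def by (intro nn_integral_mono ennreal_leI Oc_le)
    have "wasserstein_pow p ?P \<mu> \<le> ennreal Ac + (\<Sum>k\<in>I. ennreal (Bc * \<bar>af \<omega> k - b k\<bar>)) + ennreal c * ((\<Sum>j\<in>{1..N}. G (X j \<omega>)) / of_nat N + T)"
      by (rule order_trans[OF W1], unfold s1) (intro add_mono mult_left_mono s2 s3 order_refl, simp)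
    also have "\<dots> = ennreal Ac + (\<Sum>k\<in>I. ennreal (Bc * \<bar>af \<omega> k - b k\<bar>)) + ennreal c * ((\<Sum>j\<in>{1..N}. G (X j \<omega>)) / of_nat N) + ennreal c * T"
      by (simp only: distrib_left add.assoc)
    finally show ?thesis .
  qed
  have "(\<integral>\<^sup>+\<omega>. wasserstein_pow p (empirical_measure (\<lambda>k. X k \<omega>) N) \<mu> \<partial>M)
      \<le> (\<integral>\<^sup>+\<omega>. ennreal Ac + (\<Sum>k\<in>I. ennreal (Bc * \<bar>af \<omega> k - b k\<bar>)) + ennreal c * ((\<Sum>j\<in>{1..N}. G (X j \<omega>)) / of_nat N) + ennreal c * T \<partial>M)"
    by (intro nn_integral_mono pw)
  also have "\<dots> = ennreal Ac + (\<Sum>k\<in>I. \<integral>\<^sup>+\<omega>. ennreal (Bc * \<bar>af \<omega> k - b k\<bar>) \<partial>M)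
       + ennreal c * ((\<Sum>j\<in>{1..N}. \<integral>\<^sup>+\<omega>. G (X j \<omega>) \<partial>M) / of_nat N) + ennreal c * T"
  proof -
    have af_m[measurable]: "(\<lambda>\<omega>. af \<omega> k) \<in> borel_measurable M" for k unfolding af_def by measurable
    let ?F1 = "\<lambda>\<omega>::'b. ennreal Ac"
    let ?F2 = "\<lambda>\<omega>. (\<Sum>k\<in>I. ennreal (Bc * \<bar>af \<omega> k - b k\<bar>))"
    let ?F3 = "\<lambda>\<omega>. ennreal c * ((\<Sum>j\<in>{1..N}. G (X j \<omega>)) / of_nat N)"
    let ?F4 = "\<lambda>\<omega>::'b. ennreal c * T"
    have m2[measurable]: "?F2 \<in> borel_measurable M" by measurable
    have m3[measurable]: "?F3 \<in> borel_measurable M" by measurable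
    have "(\<integral>\<^sup>+\<omega>. ?F1 \<omega> + ?F2 \<omega> + ?F3 \<omega> + ?F4 \<omega> \<partial>M) = (\<integral>\<^sup>+\<omega>. ?F1 \<omega> + ?F2 \<omega> + ?F3 \<omega> \<partial>M) + (\<integral>\<^sup>+\<omega>. ?F4 \<omega> \<partial>M)"
      by (rule nn_integral_add) measurable
    also have "(\<integral>\<^sup>+\<omega>. ?F1 \<omega> + ?F2 \<omega> + ?F3 \<omega> \<partial>M) = (\<integral>\<^sup>+\<omega>. ?F1 \<omega> + ?F2 \<omega> \<partial>M) + (\<integral>\<^sup>+\<omega>. ?F3 \<omega> \<partial>M)"
      by (rule nn_integral_add) measurable
    also have "(\<integral>\<^sup>+\<omega>. ?F1 \<omega> + ?F2 \<omega> \<partial>M) = (\<integral>\<^sup>+\<omega>. ?F1 \<omega> \<partial>M) + (\<integral>\<^sup>+\<omega>. ?F2 \<omega> \<partial>M)"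
      by (rule nn_integral_add) measurable
    also have "(\<integral>\<^sup>+\<omega>. ?F1 \<omega> \<partial>M) = ennreal Ac" by (simp add: M.emeasure_space_1)
    also have "(\<integral>\<^sup>+\<omega>. ?F4 \<omega> \<partial>M) = ennreal c * T" by (simp add: M.emeasure_space_1)
    also have "(\<integral>\<^sup>+\<omega>. ?F2 \<omega> \<partial>M) = (\<Sum>k\<in>I. \<integral>\<^sup>+\<omega>. ennreal (Bc * \<bar>af \<omega> k - b k\<bar>) \<partial>M)"
      by (rule nn_integral_sum) measurable
    also have "(\<integral>\<^sup>+\<omega>. ?F3 \<omega> \<partial>M) = ennreal c * ((\<Sum>j\<in>{1..N}. \<integral>\<^sup>+\<omega>. G (X j \<omega>) \<partial>M) / of_nat N)"
    proof -
      have "(\<integral>\<^sup>+\<omega>. ?F3 \<omega> \<partial>M) = ennreal c * (\<integral>\<^sup>+\<omega>. (\<Sum>j\<in>{1..N}. G (X j \<omega>)) / of_nat N \<partial>M)"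
        by (rule nn_integral_cmult) measurable
      also have "(\<integral>\<^sup>+\<omega>. (\<Sum>j\<in>{1..N}. G (X j \<omega>)) / of_nat N \<partial>M) = (\<integral>\<^sup>+\<omega>. (\<Sum>j\<in>{1..N}. G (X j \<omega>)) \<partial>M) / of_nat N"
        by (rule nn_integral_divide) measurable
      also have "(\<integral>\<^sup>+\<omega>. (\<Sum>j\<in>{1..N}. G (X j \<omega>)) \<partial>M) = (\<Sum>j\<in>{1..N}. \<integral>\<^sup>+\<omega>. G (X j \<omega>) \<partial>M)"
        by (rule nn_integral_sum) measurable
      finally show ?thesis .
    qed
    finally show ?thesis .
  qed
  also have "\<dots> \<le> ennreal Ac + (\<Sum>k\<in>I. ennreal (Bc / sqrt N)) + ennreal c * ((\<Sum>j\<in>{1..N}. T) / of_nat N) + ennreal c * T"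
  proof (intro add_mono order_refl sum_mono)
    fix k
    have "(\<integral>\<^sup>+\<omega>. ennreal (Bc * \<bar>af \<omega> k - b k\<bar>) \<partial>M) = ennreal Bc * (\<integral>\<^sup>+\<omega>. ennreal \<bar>af \<omega> k - b k\<bar> \<partial>M)"
      by (simp add: ennreal_mult Bc0 nn_integral_cmult af_def)
    also have "\<dots> \<le> ennreal Bc * ennreal (1 / sqrt N)"
      unfolding af_def b_def
      by (intro mult_left_mono M.emp_dev[OF Xm ind dist Ab N]) auto
    also have "\<dots> = ennreal (Bc / sqrt N)" by (simp add: ennreal_mult[symmetric] Bc0)
    finally show "(\<integral>\<^sup>+\<omega>. ennreal (Bc * \<bar>af \<omega> k - b k\<bar>) \<partial>M) \<le> ennreal (Bc / sqrt N)" .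
  next
    have "(\<integral>\<^sup>+\<omega>. G (X j \<omega>) \<partial>M) = T" for j
      unfolding T_def dist[of j, symmetric] by (subst nn_integral_distr) auto
    then show "ennreal c * ((\<Sum>j\<in>{1..N}. \<integral>\<^sup>+\<omega>. G (X j \<omega>) \<partial>M) / of_nat N) \<le> ennreal c * ((\<Sum>j\<in>{1..N}. T) / of_nat N)"
      by simp
  qed
  also have "\<dots> = ennreal (Ac + Bc * real ((2 * K) ^ DIM('a)) / sqrt N) + ennreal (2 powr p) * T"
  proof -
    have 1: "(\<Sum>j\<in>{1..N}. T) / of_nat N = T"
    proof -
      have "(\<Sum>j\<in>{1..N}. T) = T * of_nat N" by (simp add: mult.commute)
      moreover have "(of_nat N :: ennreal) \<noteq> 0" "(of_nat N :: ennreal) \<noteq> top" using N by auto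
      ultimately show ?thesis by (simp add: ennreal_mult_divide_eq)
    qed
    have 2: "(\<Sum>k\<in>I. ennreal (Bc / sqrt N)) = ennreal (Bc * real ((2 * K) ^ DIM('a)) / sqrt N)"
    proof -
      have "(\<Sum>k\<in>I. ennreal (Bc / sqrt N)) = of_nat (card I) * ennreal (Bc / sqrt N)" by simp
      also have "(of_nat (card I) :: ennreal) = ennreal (real (card I))" by (rule ennreal_of_nat_eq_real_of_nat)
      also have "ennreal (real (card I)) * ennreal (Bc / sqrt N) = ennreal (real (card I) * (Bc / sqrt N))"
        by (rule ennreal_mult[symmetric]) (auto simp: Bc0)
      also have "real (card I) * (Bc / sqrt N) = Bc * real ((2 * K) ^ DIM('a)) / sqrt N" by (simp add: cardI)
      finally show ?thesis .
    qed
    have 3: "ennreal c * T + ennreal c * T = ennreal (2 powr p) * T"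
    proof -
      have "c + c = 2 powr p" using p by (simp add: c_def powr_diff)
      then have "ennreal c + ennreal c = ennreal (2 powr p)" using c0 by (simp add: ennreal_plus[symmetric])
      then show ?thesis by (simp add: distrib_right[symmetric])
    qed
    have 4: "ennreal Ac + ennreal (Bc * real ((2 * K) ^ DIM('a)) / sqrt N) = ennreal (Ac + Bc * real ((2 * K) ^ DIM('a)) / sqrt N)"
      by (rule ennreal_plus[symmetric]) (auto simp: Ac_def Bc0)
    show ?thesis unfolding 1 2 4[symmetric] 3[symmetric] by (simp only: add.assoc)
  qed
  finally show ?thesis by (simp only: Ac_def Bc_def c_def T_def G_def)
qed

lemma rem_bound:
  fixes N n K D :: nat and d p \<gamma> c0 :: real
  assumes N: "N \<ge> 1" and dD: "d = real D" and D: "D \<ge> 1" and p: "p \<ge> 1" and g: "\<gamma> > 0" and c0: "c0 > 0"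
    and n: "n = nat \<lceil>real N powr c0\<rceil>" and K: "K = nat \<lceil>real N powr \<gamma> * real n\<rceil>"
  shows "(d / n) powr p + 2 powr (p - 1) * (d * K / n) powr p * real ((2 * K) ^ D) / sqrt N
     \<le> d powr p * real N powr (- (c0 * p)) + 2 powr (p - 1) * (2 * d) powr p * 8 powr d * real N powr (\<gamma> * p + (\<gamma> + c0) * d - 1 / 2)"
proof -
  define t where "t = real N powr c0"
  define R where "R = real N powr \<gamma>"
  have N1: "real N \<ge> 1" using N by simp
  have t1: "t \<ge> 1" unfolding t_def using N1 c0 by (simp add: ge_one_powr_ge_zero)
  have R1: "R \<ge> 1" unfolding R_def using N1 g by (simp add: ge_one_powr_ge_zero)
  have nt: "real n \<ge> t" "real n \<le> 2 * t"
  proof -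
    have "real n = of_int \<lceil>t\<rceil>" using t1 by (simp add: n t_def)
    moreover have "t \<le> of_int \<lceil>t\<rceil>" "of_int \<lceil>t\<rceil> < t + 1" by linarith+
    ultimately show "real n \<ge> t" "real n \<le> 2 * t" using t1 by auto
  qed
  have n0: "real n > 0" using nt t1 by linarith
  have Kb: "real K \<ge> R * n" "real K \<le> 2 * R * n"
  proof -
    have Rn: "R * n \<ge> 1" using R1 nt t1 by (metis mult_mono' mult_1 order.trans zero_le_one)
    have "real K = of_int \<lceil>R * n\<rceil>" using Rn by (simp add: K R_def)
    moreover have "R * n \<le> of_int \<lceil>R * n\<rceil>" "of_int \<lceil>R * n\<rceil> < R * n + 1" by linarith+
    ultimately show "real K \<ge> R * n" "real K \<le> 2 * R * n" using Rn by auto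
  qed
  have d1: "d \<ge> 1" using D dD by simp
  have A1: "(d / n) powr p \<le> d powr p * real N powr (- (c0 * p))"
  proof -
    have "(d / n) powr p \<le> (d / t) powr p"
      using nt t1 d1 p by (intro powr_mono2 divide_left_mono) auto
    also have "\<dots> = d powr p * t powr (- p)"
      using t1 d1 by (subst powr_divide) (auto simp: powr_minus_divide)
    also have "t powr (- p) = real N powr (- (c0 * p))"
      unfolding t_def by (simp add: powr_powr)
    finally show ?thesis .
  qed
  have B1: "(d * K / n) powr p \<le> (2 * d) powr p * real N powr (\<gamma> * p)"
  proof -
    have "d * K / n \<le> 2 * d * R"
      using Kb n0 d1 by (simp add: field_simps)
    hence "(d * K / n) powr p \<le> (2 * d * R) powr p"
      using p d1 n0 by (intro powr_mono2) auto
    also have "\<dots> = (2 * d) powr p * R powr p" using d1 R1 by (simp add: powr_mult)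
    also have "R powr p = real N powr (\<gamma> * p)" unfolding R_def by (simp add: powr_powr)
    finally show ?thesis .
  qed
  have B2: "real ((2 * K) ^ D) \<le> 8 powr d * real N powr ((\<gamma> + c0) * d)"
  proof -
    have "real ((2 * K) ^ D) = (2 * real K) ^ D" by simp
    also have "\<dots> \<le> (8 * R * t) ^ D"
    proof (rule power_mono)
      have "2 * real K \<le> 4 * R * n" using Kb by simp
      also have "\<dots> \<le> 4 * R * (2 * t)" using nt R1 by (intro mult_left_mono) auto
      finally show "2 * real K \<le> 8 * R * t" by simp
    qed simp
    also have "\<dots> = (8 * R * t) powr d" using R1 t1 dD by (simp add: powr_realpow)
    also have "\<dots> = 8 powr d * (R powr d * t powr d)" using R1 t1 by (simp add: powr_mult)
    also have "R powr d * t powr d = real N powr ((\<gamma> + c0) * d)"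
      unfolding R_def t_def by (simp add: powr_powr powr_add[symmetric] distrib_right)
    finally show ?thesis by simp
  qed
  have sq: "1 / sqrt N = real N powr (- 1 / 2)"
    using N1 by (simp add: powr_minus_divide powr_half_sqrt[symmetric])
  have "2 powr (p - 1) * (d * K / n) powr p * real ((2 * K) ^ D) / sqrt N
      = 2 powr (p - 1) * ((d * K / n) powr p * real ((2 * K) ^ D)) * (1 / sqrt N)" by simp
  also have "\<dots> \<le> 2 powr (p - 1) * (((2 * d) powr p * real N powr (\<gamma> * p)) * (8 powr d * real N powr ((\<gamma> + c0) * d))) * (1 / sqrt N)"
    by (intro mult_right_mono mult_left_mono mult_mono B1 B2) auto
  also have "\<dots> = 2 powr (p - 1) * (2 * d) powr p * 8 powr d * (real N powr (\<gamma> * p) * real N powr ((\<gamma> + c0) * d) * real N powr (- 1 / 2))"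
    unfolding sq by (simp add: ac_simps)
  also have "real N powr (\<gamma> * p) * real N powr ((\<gamma> + c0) * d) * real N powr (- 1 / 2) = real N powr (\<gamma> * p + (\<gamma> + c0) * d - 1 / 2)"
    using N1 by (simp add: powr_add[symmetric])
  finally show ?thesis using A1 by linarith
qed

lemma tail_bound:
  fixes \<mu> :: "'a::euclidean_space measure"
  assumes Smu: "sets \<mu> = sets borel" and al: "\<alpha> > 0" and R: "R > 0" and rR: "r \<ge> R" and p: "p \<ge> 1"
    and fin: "(\<integral>\<^sup>+ x. ennreal (norm x powr p * (ln (1 + norm x)) powr \<alpha>) \<partial>\<mu>) < \<infinity>"
  shows "(\<integral>\<^sup>+ x. ennreal (indicator {x. r \<le> norm x} x * norm x powr p) \<partial>\<mu>)
     \<le> ennreal ((\<integral>x. norm x powr p * (ln (1 + norm x)) powr \<alpha> \<partial>\<mu>) / (ln (1 + R)) powr \<alpha>)"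
proof -
  define F where "F x = norm x powr p * (ln (1 + norm x)) powr \<alpha>" for x :: 'a
  define L where "L = (ln (1 + R)) powr \<alpha>"
  have L0: "L > 0" using R by (simp add: L_def)
  have Fm[measurable]: "F \<in> borel_measurable \<mu>" unfolding F_def measurable_cong_sets[OF Smu refl] by measurable
  have F0: "F x \<ge> 0" for x by (simp add: F_def)
  have intF: "integrable \<mu> F"
    by (rule integrableI_bounded) (use fin F0 in \<open>auto simp: F_def\<close>)
  have nnF: "(\<integral>\<^sup>+ x. ennreal (F x) \<partial>\<mu>) = ennreal (\<integral>x. F x \<partial>\<mu>)"
    by (rule nn_integral_eq_integral[OF intF]) (simp add: F0)
  have pw: "indicator {x. r \<le> norm x} x * norm x powr p \<le> F x * (1 / L)" for x :: 'a
  proof (cases "r \<le> norm x")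
    case True
    have "ln (1 + R) \<le> ln (1 + norm x)" using True rR R by simp
    hence "L \<le> (ln (1 + norm x)) powr \<alpha>" unfolding L_def using R al by (intro powr_mono2) auto
    hence "1 \<le> (ln (1 + norm x)) powr \<alpha> / L" using L0 by simp
    hence "norm x powr p * 1 \<le> norm x powr p * ((ln (1 + norm x)) powr \<alpha> / L)" by (intro mult_left_mono) auto
    then show ?thesis using True by (simp add: F_def)
  qed (simp add: F0 L0 less_imp_le)
  have "(\<integral>\<^sup>+ x. ennreal (indicator {x. r \<le> norm x} x * norm x powr p) \<partial>\<mu>) \<le> (\<integral>\<^sup>+ x. ennreal (F x) * ennreal (1 / L) \<partial>\<mu>)"
  proof (intro nn_integral_mono)
    fix x
    have "ennreal (F x) * ennreal (1 / L) = ennreal (F x * (1 / L))"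
      using F0 L0 by (simp add: ennreal_mult[symmetric] less_imp_le)
    then show "ennreal (indicator {x. r \<le> norm x} x * norm x powr p) \<le> ennreal (F x) * ennreal (1 / L)"
      using pw[of x] by (simp add: ennreal_leI)
  qed
  also have "\<dots> = ennreal (\<integral>x. F x \<partial>\<mu>) * ennreal (1 / L)"
    by (subst nn_integral_multc) (auto simp: nnF)
  also have "\<dots> = ennreal ((\<integral>x. F x \<partial>\<mu>) / L)"
    using L0 F0 by (simp add: ennreal_mult[symmetric] integral_nonneg less_imp_le)
  finally show ?thesis by (simp add: F_def L_def)
qed

lemma small_term:
  fixes e \<gamma> \<alpha> C :: real
  assumes e: "e > 0" and g: "\<gamma> > 0" and al: "\<alpha> > 0"
  shows "(\<lambda>N::nat. C * real N powr (- e)) \<in> o(\<lambda>N. 1 / (ln (1 + real N powr \<gamma>)) powr \<alpha>)"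
proof (rule smalloI_tendsto)
  have lim: "(\<lambda>N::nat. real N powr (-e) * ln (1 + real N powr \<gamma>) powr \<alpha>) \<longlonglongrightarrow> 0"
    using e g al by real_asymp
  have "(\<lambda>N::nat. C * (real N powr (-e) * ln (1 + real N powr \<gamma>) powr \<alpha>)) \<longlonglongrightarrow> C * 0"
    by (intro tendsto_mult tendsto_const lim)
  then show "(\<lambda>N::nat. C * real N powr (- e) / (1 / (ln (1 + real N powr \<gamma>)) powr \<alpha>)) \<longlonglongrightarrow> 0"
    by (simp add: mult.assoc)
  show "\<forall>\<^sub>F N in sequentially. 1 / (ln (1 + real N powr \<gamma>)) powr \<alpha> \<noteq> 0"
  proof (rule eventually_sequentiallyI[of 1])
    fix N :: nat assume "N \<ge> 1"
    hence "real N powr \<gamma> > 0" by simp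
    hence "ln (1 + real N powr \<gamma>) > 0" by (intro ln_gt_zero) simp
    thus "1 / (ln (1 + real N powr \<gamma>)) powr \<alpha> \<noteq> 0" by simp
  qed
qed

lemma main_asym:
  fixes M :: "'b measure" and X :: "nat \<Rightarrow> 'b \<Rightarrow> 'a::euclidean_space"
    and \<mu> :: "'a measure" and p \<alpha> \<epsilon> :: real
  assumes PM: "prob_space M"
    and Pmu: "prob_space \<mu>" and Smu: "sets \<mu> = sets borel"
    and p: "p \<ge> 1" and al: "\<alpha> > 0" and eps: "\<epsilon> > 0"
    and fin: "(\<integral>\<^sup>+ x. ennreal (norm x powr p * (ln (1 + norm x)) powr \<alpha>) \<partial>\<mu>) < \<infinity>"
    and Xm: "\<And>k. X k \<in> borel_measurable M"
    and ind: "prob_space.indep_vars M (\<lambda>_. borel) X UNIV"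
    and dist: "\<And>k. distr M borel (X k) = \<mu>"
    and dd: "d = real DIM('a)" and gg: "\<gamma> = p / (2 * (p + \<epsilon>) * (p + d))" and CC: "C \<ge> 2 powr p"
    and mm: "m = (\<integral>x. norm x powr p * (ln (1 + norm x)) powr \<alpha> \<partial>\<mu>)"
    and LL: "L = (\<lambda>N::nat. (ln (1 + real N powr \<gamma>)) powr \<alpha>)"
  shows "\<exists>g :: nat \<Rightarrow> real. g \<in> o(\<lambda>N. 1 / L N) \<and>
              (\<forall>\<^sub>F N in sequentially.
                 (\<integral>\<^sup>+ \<omega>. wasserstein_pow p (empirical_measure (\<lambda>k. X k \<omega>) N) \<mu> \<partial>M)
                   \<le> ennreal (C * (1 + m) / L N + g N))"
proof -
  have d1: "d \<ge> 1" using dd by (simp add: DIM_positive Suc_le_eq)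
  have g0: "\<gamma> > 0" using gg p eps d1 by simp
  define c0 where "c0 = \<epsilon> / (4 * d * (p + \<epsilon>))"
  have c00: "c0 > 0" using eps p d1 by (simp add: c0_def)
  define e1 where "e1 = c0 * p"
  define e2 where "e2 = \<epsilon> / (4 * (p + \<epsilon>))"
  have e10: "e1 > 0" using c00 p by (simp add: e1_def)
  have e20: "e2 > 0" using eps p by (simp add: e2_def)
  have expo: "\<gamma> * p + (\<gamma> + c0) * d - 1 / 2 = - e2"
  proof -
    have q: "p + \<epsilon> > 0" "p + d > 0" using p eps d1 by auto
    have h1: "\<gamma> * p + \<gamma> * d = p / (2 * (p + \<epsilon>))"
    proof -
      have "\<gamma> * p + \<gamma> * d = \<gamma> * (p + d)" by (simp add: algebra_simps)
      also have "\<dots> = p / (2 * (p + \<epsilon>))" unfolding gg using q by (simp add: divide_simps)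
      finally show ?thesis .
    qed
    have h2: "c0 * d = \<epsilon> / (4 * (p + \<epsilon>))" unfolding c0_def using q d1 by (simp add: divide_simps)
    have "\<gamma> * p + (\<gamma> + c0) * d - 1 / 2 = (\<gamma> * p + \<gamma> * d) + c0 * d - 1 / 2" by (simp add: algebra_simps)
    also have "\<dots> = p / (2 * (p + \<epsilon>)) + \<epsilon> / (4 * (p + \<epsilon>)) - 1 / 2" by (simp only: h1 h2)
    also have "\<dots> = - e2"
    proof -
      define qq where "qq = p + \<epsilon>"
      have qq0: "qq > 0" using q by (simp add: qq_def)
      have "p / (2 * qq) + \<epsilon> / (4 * qq) - 1 / 2 = - (\<epsilon> / (4 * qq))"
        using qq0 by (simp add: divide_simps) (simp add: qq_def algebra_simps)
      then show ?thesis by (simp add: qq_def e2_def)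
    qed
    finally show ?thesis .
  qed
  define C1 where "C1 = d powr p"
  define C2 where "C2 = 2 powr (p - 1) * (2 * d) powr p * 8 powr d"
  define g where "g N = C1 * real N powr (- e1) + C2 * real N powr (- e2)" for N :: nat
  have m0: "m \<ge> 0" unfolding mm by (intro integral_nonneg_AE) auto
  have "g \<in> o(\<lambda>N. 1 / L N)"
    unfolding g_def LL by (intro sum_in_smallo small_term e10 e20 g0 al)
  moreover have "\<forall>\<^sub>F N in sequentially.
      (\<integral>\<^sup>+ \<omega>. wasserstein_pow p (empirical_measure (\<lambda>k. X k \<omega>) N) \<mu> \<partial>M) \<le> ennreal (C * (1 + m) / L N + g N)"
  proof (rule eventually_sequentiallyI[of 1])
    fix N :: nat assume N: "N \<ge> 1"
    define n where "n = nat \<lceil>real N powr c0\<rceil>"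
    define K where "K = nat \<lceil>real N powr \<gamma> * real n\<rceil>"
    define R where "R = real N powr \<gamma>"
    have N1: "real N \<ge> 1" using N by simp
    have R1: "R \<ge> 1" unfolding R_def using N1 g0 by (simp add: ge_one_powr_ge_zero)
    have t1: "real N powr c0 \<ge> 1" using N1 c00 by (simp add: ge_one_powr_ge_zero)
    have n1: "n \<ge> 1" using t1 unfolding n_def by linarith
    have KR: "real K / real n \<ge> R"
    proof -
      have "real K \<ge> R * real n" unfolding K_def R_def by linarith
      thus ?thesis using n1 by (simp add: field_simps)
    qed
    define T where "T = (\<integral>\<^sup>+ x. ennreal (indicator {x. real K / real n \<le> norm x} x * norm x powr p) \<partial>\<mu>)"
    define rem where "rem = (d / n) powr p + 2 powr (p - 1) * (d * K / n) powr p * real ((2 * K) ^ DIM('a)) / sqrt N"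
    have L0: "L N > 0" unfolding LL using R1 by (simp add: R_def[symmetric])
    have "(\<integral>\<^sup>+ \<omega>. wasserstein_pow p (empirical_measure (\<lambda>k. X k \<omega>) N) \<mu> \<partial>M) \<le> ennreal rem + ennreal (2 powr p) * T"
      using main_bound[OF PM Pmu Smu p Xm ind dist N n1, of K] unfolding rem_def T_def dd by simp
    also have "T \<le> ennreal (m / L N)"
      unfolding T_def mm LL using tail_bound[OF Smu al _ KR p fin] R1 N by (simp add: R_def)
    also have "rem \<le> g N"
    proof -
      have "rem \<le> d powr p * real N powr (- (c0 * p)) + 2 powr (p - 1) * (2 * d) powr p * 8 powr d * real N powr (\<gamma> * p + (\<gamma> + c0) * d - 1 / 2)"
        unfolding rem_def by (rule rem_bound[OF N dd _ p g0 c00 n_def K_def]) simp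
      then show ?thesis unfolding expo by (simp add: g_def C1_def C2_def e1_def mult.assoc)
    qed
    hence "ennreal rem \<le> ennreal (g N)" by (rule ennreal_leI)
    finally have "(\<integral>\<^sup>+ \<omega>. wasserstein_pow p (empirical_measure (\<lambda>k. X k \<omega>) N) \<mu> \<partial>M)
        \<le> ennreal (g N) + ennreal (2 powr p) * ennreal (m / L N)"
      by (simp add: add_mono mult_left_mono)
    also have "\<dots> = ennreal (g N + 2 powr p * (m / L N))"
    proof -
      have gN0: "g N \<ge> 0" unfolding g_def C1_def C2_def by simp
      have "ennreal (2 powr p) * ennreal (m / L N) = ennreal (2 powr p * (m / L N))"
        by (rule ennreal_mult[symmetric]) (use m0 L0 in auto)
      moreover have "ennreal (g N) + ennreal (2 powr p * (m / L N)) = ennreal (g N + 2 powr p * (m / L N))"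
        by (rule ennreal_plus[symmetric]) (use m0 L0 gN0 in auto)
      ultimately show ?thesis by simp
    qed
    also have "\<dots> \<le> ennreal (C * (1 + m) / L N + g N)"
    proof (rule ennreal_leI)
      have "0 < (2::real) powr p" by simp
      hence C0: "C \<ge> 0" using CC by linarith
      have "2 powr p * m \<le> C * (1 + m)" using CC m0 C0 by (intro mult_mono) auto
      hence "2 powr p * m / L N \<le> C * (1 + m) / L N" using L0 by (intro divide_right_mono) auto
      thus "g N + 2 powr p * (m / L N) \<le> C * (1 + m) / L N + g N" by simp
    qed
    finally show "(\<integral>\<^sup>+ \<omega>. wasserstein_pow p (empirical_measure (\<lambda>k. X k \<omega>) N) \<mu> \<partial>M) \<le> ennreal (C * (1 + m) / L N + g N)" .
  qed
  ultimately show ?thesis by blast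
qed

theorem corollary3p5:
  fixes M :: "'b measure" and X :: "nat \<Rightarrow> 'b \<Rightarrow> 'a::euclidean_space"
    and \<mu> :: "'a measure" and p \<alpha> \<epsilon> :: real
  assumes "prob_space M"
    and "prob_space \<mu>" and "sets \<mu> = sets borel"
    and "p \<ge> 1" and "\<alpha> > 0" and "\<epsilon> > 0"
    and "(\<integral>\<^sup>+ x. ennreal (norm x powr p * (ln (1 + norm x)) powr \<alpha>) \<partial>\<mu>) < \<infinity>"
    and "\<And>k. X k \<in> borel_measurable M"
    and "prob_space.indep_vars M (\<lambda>_. borel) X UNIV"
    and "\<And>k. distr M borel (X k) = \<mu>"
  shows "let d = real DIM('a);
             \<gamma> = p / (2 * (p + \<epsilon>) * (p + d));
             Cpd = 2 powr (3/2) * (Gamma ((p + d) / 2) / Gamma (d / 2)) powr (1 / p);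
             C = max (2 powr (p - 1) * Cpd powr p) (2 powr (3 * p - 2));
             m = (\<integral>x. norm x powr p * (ln (1 + norm x)) powr \<alpha> \<partial>\<mu>);
             L = (\<lambda>N::nat. (ln (1 + real N powr \<gamma>)) powr \<alpha>)
         in \<exists>g :: nat \<Rightarrow> real. g \<in> o(\<lambda>N. 1 / L N) \<and>
              (\<forall>\<^sub>F N in sequentially.
                 (\<integral>\<^sup>+ \<omega>. wasserstein_pow p (empirical_measure (\<lambda>k. X k \<omega>) N) \<mu> \<partial>M)
                   \<le> ennreal (C * (1 + m) / L N + g N))"
    unfolding Let_def
proof (rule main_asym[OF assms refl refl _ refl refl])
  have "(2::real) powr p \<le> 2 powr (3 * p - 2)" using assms(4) by (intro powr_mono) auto
  then show "2 powr p \<le> max (2 powr (p - 1) * (2 powr (3 / 2) * (Gamma ((p + real DIM('a)) / 2) / Gamma (real DIM('a) / 2)) powr (1 / p)) powr p) (2 powr (3 * p - 2))"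
    by (rule order_trans) simp
qed

end
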